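(* Fix $p\ge2$, $\beta>0$ and a sequence of $p$-tensors $\{\bm J_N\}_{N\ge1}$ (symmetric, with zero diagonals) such that (1) $\sup_{N\ge1}\mathbb E_\beta[\|\bm J_N(\bm Z)\|^4]<\infty$, where the expectation is over $\bm Z\sim\mathbb P_\beta$ and $\|\cdot\|$ is the operator norm; and (2) $\liminf_{N\to\infty}\frac1NF_N(\beta)>0$. Then, given a single sample $\bm X\sim\mathbb P_\beta$, the MPL estimate $\hat\beta_N(\bm X)$ is $\sqrt N$-consistent for $\beta$: for every $\delta>0$ there is $M=M(\delta,\beta)>0$ with $\mathbb P_\beta(\sqrt N|\hat\beta_N(\bm X)-\beta|\le M)>1-\delta$ for all $N$ large enough.
   Context: $p$-tensor Ising model: given a $p$-tensor $\bm J_N=((J_{i_1\dots i_p}))_{1\le i_1,\dots,i_p\le N}$ that is symmetric under permutations of indices and satisfies $J_{i_1\dots i_p}=0$ whenever two indices coincide, and $\beta\ge0$, $\mathbb P_\beta(\bm X)=\frac{1}{2^NZ_N(\beta)}e^{\beta H_N(\bm X)}$ on $\{-1,1\}^N$, with $H_N(\bm X)=\sum_{1\le i_1,\dots,i_p\le N}J_{i_1\dots i_p}X_{i_1}\cdots X_{i_p}$, $Z_N(\beta)=2^{-N}\sum_{\bm X}e^{\beta H_N(\bm X)}$, $F_N(\beta)=\log Z_N(\beta)$. Let $m_i(\bm X)=\sum_{i_2,\dots,i_p}J_{ii_2\dots i_p}X_{i_2}\cdots X_{i_p}$. The MPL estimate is $\hat\beta_N(\bm X)=\inf\{b\ge0:H_N(\bm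 X)=\sum_{i=1}^Nm_i(\bm X)\tanh(pb\,m_i(\bm X))\}$ (infimum of the empty set $=+\infty$). The local interaction matrix at $\bm x\in\{-1,1\}^N$ is the $N\times N$ matrix $\bm J_N(\bm x)$ with entries $J_{i_1i_2}(\bm x)=\sum_{i_3,\dots,i_p}J_{i_1i_2i_3\dots i_p}x_{i_3}\cdots x_{i_p}$ (for $p=2$, $\bm J_N(\bm x)=\bm J_N$). *)

theory Defs
  imports "HOL-Analysis.Analysis"
begin

definition spins :: "nat \<Rightarrow> (nat \<Rightarrow> real) set" where
  "spins N = {x. (\<forall>i<N. x i = 1 \<or> x i = -1) \<and> (\<forall>i\<ge>N. x i = 0)}"

definition idx :: "nat \<Rightarrow> nat \<Rightarrow> nat list set" where
  "idx N k = {is. length is = k \<and> set is \<subseteq> {..<N}}"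

definition valid_tensor :: "nat \<Rightarrow> nat \<Rightarrow> (nat list \<Rightarrow> real) \<Rightarrow> bool" where
  "valid_tensor p N J \<longleftrightarrow>
     (\<forall>is\<in>idx N p. \<forall>js\<in>idx N p. mset is = mset js \<longrightarrow> J is = J js) \<and>
     (\<forall>is\<in>idx N p. \<not> distinct is \<longrightarrow> J is = 0)"

definition hamiltonian :: "nat \<Rightarrow> nat \<Rightarrow> (nat list \<Rightarrow> real) \<Rightarrow> (nat \<Rightarrow> real) \<Rightarrow> real" where
  "hamiltonian p N J x = (\<Sum>is\<in>idx N p. J is * prod_list (map x is))"

definition local_field :: "nat \<Rightarrow> nat \<Rightarrow> (nat list \<Rightarrow> real) \<Rightarrow> (nat \<Rightarrow> real) \<Rightarrow> nat \<Rightarrow> real" where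
  "local_field p N J x i = (\<Sum>js\<in>idx N (p - 1). J (i # js) * prod_list (map x js))"

definition local_matrix :: "nat \<Rightarrow> nat \<Rightarrow> (nat list \<Rightarrow> real) \<Rightarrow> (nat \<Rightarrow> real) \<Rightarrow> nat \<Rightarrow> nat \<Rightarrow> real" where
  "local_matrix p N J x i1 i2 = (\<Sum>ks\<in>idx N (p - 2). J (i1 # i2 # ks) * prod_list (map x ks))"

definition op_norm :: "nat \<Rightarrow> (nat \<Rightarrow> nat \<Rightarrow> real) \<Rightarrow> real" where
  "op_norm N A = (SUP v\<in>{v :: nat \<Rightarrow> real. (\<Sum>j<N. (v j)\<^sup>2) \<le> 1}.
                    sqrt (\<Sum>i<N. (\<Sum>j<N. A i j * v j)\<^sup>2))"

definition partition_fn :: "nat \<Rightarrow> nat \<Rightarrow> (nat list \<Rightarrow> real) \<Rightarrow> real \<Rightarrow> real" where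
  "partition_fn p N J \<beta> = (\<Sum>x\<in>spins N. exp (\<beta> * hamiltonian p N J x)) / 2 ^ N"

definition free_energy :: "nat \<Rightarrow> nat \<Rightarrow> (nat list \<Rightarrow> real) \<Rightarrow> real \<Rightarrow> real" where
  "free_energy p N J \<beta> = ln (partition_fn p N J \<beta>)"

definition gibbs :: "nat \<Rightarrow> nat \<Rightarrow> (nat list \<Rightarrow> real) \<Rightarrow> real \<Rightarrow> (nat \<Rightarrow> real) \<Rightarrow> real" where
  "gibbs p N J \<beta> x = exp (\<beta> * hamiltonian p N J x) / (2 ^ N * partition_fn p N J \<beta>)"

definition gibbs_prob :: "nat \<Rightarrow> nat \<Rightarrow> (nat list \<Rightarrow> real) \<Rightarrow> real \<Rightarrow> ((nat \<Rightarrow> real) \<Rightarrow> bool) \<Rightarrow> real" where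
  "gibbs_prob p N J \<beta> E = (\<Sum>x\<in>{x\<in>spins N. E x}. gibbs p N J \<beta> x)"

definition gibbs_expect :: "nat \<Rightarrow> nat \<Rightarrow> (nat list \<Rightarrow> real) \<Rightarrow> real \<Rightarrow> ((nat \<Rightarrow> real) \<Rightarrow> real) \<Rightarrow> real" where
  "gibbs_expect p N J \<beta> f = (\<Sum>x\<in>spins N. gibbs p N J \<beta> x * f x)"

text \<open>MPL estimate: infimum over b >= 0 solving the pseudo-likelihood equation,
 in the extended reals (Inf {} = +infinity).\<close>
definition mpl_estimate :: "nat \<Rightarrow> nat \<Rightarrow> (nat list \<Rightarrow> real) \<Rightarrow> (nat \<Rightarrow> real) \<Rightarrow> ereal" where
  "mpl_estimate p N J x = Inf (ereal ` {b :: real. b \<ge> 0 \<and>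
      hamiltonian p N J x =
        (\<Sum>i<N. local_field p N J x i * tanh (real p * b * local_field p N J x i))})"

end

theory Submission
  imports Defs "HOL-Analysis.Analysis" "HOL-Real_Asymp.Real_Asymp"
begin

definition T :: "(nat list \<Rightarrow> real) \<Rightarrow> nat \<Rightarrow> nat list \<Rightarrow> nat \<Rightarrow> (nat \<Rightarrow> real) \<Rightarrow> real" where
  "T J N pre q x = (\<Sum>js\<in>idx N q. J (pre @ js) * prod_list (map x js))"

definition flip :: "(nat \<Rightarrow> real) \<Rightarrow> nat \<Rightarrow> nat \<Rightarrow> real" where
  "flip x j = x(j := - x j)"

lemma finite_idx: "finite (idx N q)"
proof -
  have "idx N q = {xs. set xs \<subseteq> {..<N} \<and> length xs = q}" unfolding idx_def by auto
  thus ?thesis using finite_lists_length_eq[of "{..<N}" q] by simp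
qed

lemma idx_0: "idx N 0 = {[]}" unfolding idx_def by auto

lemma idx_Suc_eq: "idx N (Suc q) = (\<lambda>(k,js). k#js) ` ({..<N} \<times> idx N q)"
proof
  show "idx N (Suc q) \<subseteq> (\<lambda>(k,js). k#js) ` ({..<N} \<times> idx N q)"
  proof
    fix xs assume "xs \<in> idx N (Suc q)"
    then obtain k js where "xs = k#js" "k < N" "js \<in> idx N q"
      unfolding idx_def by (cases xs) auto
    thus "xs \<in> (\<lambda>(k,js). k#js) ` ({..<N} \<times> idx N q)" by force
  qed
qed (auto simp: idx_def)

lemma sum_idx_Suc: "(\<Sum>xs\<in>idx N (Suc q). f xs) = (\<Sum>k<N. \<Sum>js\<in>idx N q. f (k#js))"
proof -
  have inj: "inj_on (\<lambda>(k,js). k#js) ({..<N} \<times> idx N q)" by (auto simp: inj_on_def)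
  have "(\<Sum>xs\<in>idx N (Suc q). f xs) = (\<Sum>(k,js)\<in>{..<N} \<times> idx N q. f (k#js))"
    unfolding idx_Suc_eq by (subst sum.reindex[OF inj]) (simp add: case_prod_unfold)
  also have "\<dots> = (\<Sum>k<N. \<Sum>js\<in>idx N q. f (k#js))"
    by (subst sum.cartesian_product[symmetric]) simp
  finally show ?thesis .
qed

lemma T_0: "T J N pre 0 x = J pre" unfolding T_def idx_0 by simp

lemma T_Suc: "T J N pre (Suc q) x = (\<Sum>k<N. x k * T J N (pre @ [k]) q x)"
  unfolding T_def sum_idx_Suc by (simp add: sum_distrib_left mult_ac)

lemma idx_mem: "set xs \<subseteq> {..<N} \<Longrightarrow> xs \<in> idx N (length xs)" unfolding idx_def by auto

lemma T_swap:
  assumes v: "valid_tensor p N J" and len: "length pre + 2 + q = p"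
    and pre: "set pre \<subseteq> {..<N}" and k: "k < N" and j: "j < N"
  shows "T J N (pre @ [k, j]) q x = T J N (pre @ [j, k]) q x"
  unfolding T_def
proof (rule sum.cong[OF refl])
  fix js assume js: "js \<in> idx N q"
  have a: "pre @ [k,j] @ js \<in> idx N p" "pre @ [j,k] @ js \<in> idx N p"
    using js pre k j len unfolding idx_def by auto
  have "mset (pre @ [k,j] @ js) = mset (pre @ [j,k] @ js)" by simp
  hence "J (pre @ [k,j] @ js) = J (pre @ [j,k] @ js)" using v a unfolding valid_tensor_def by blast
  thus "J ((pre @ [k, j]) @ js) * prod_list (map x js) = J ((pre @ [j, k]) @ js) * prod_list (map x js)"
    by simp
qed

lemma T_diag:
  assumes v: "valid_tensor p N J" and len: "length pre + 2 + q = p"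
    and pre: "set pre \<subseteq> {..<N}" and j: "j < N"
  shows "T J N (pre @ [j, j]) q x = 0"
  unfolding T_def
proof (rule sum.neutral, intro ballI)
  fix js assume js: "js \<in> idx N q"
  have a: "pre @ [j,j] @ js \<in> idx N p"
    using js pre j len unfolding idx_def by auto
  have "\<not> distinct (pre @ [j,j] @ js)" by simp
  hence "J (pre @ [j,j] @ js) = 0" using v a unfolding valid_tensor_def by blast
  thus "J ((pre @ [j, j]) @ js) * prod_list (map x js) = 0" by simp
qed

lemma flip_same[simp]: "flip x j j = - x j" and flip_other[simp]: "k \<noteq> j \<Longrightarrow> flip x j k = x k"
  unfolding flip_def by auto

lemma T_flip:
  assumes v: "valid_tensor p N J" and j: "j < N"
  shows "length pre + Suc q = p \<Longrightarrow> set pre \<subseteq> {..<N} \<Longrightarrow>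
    T J N pre (Suc q) x - T J N pre (Suc q) (flip x j) = 2 * real (Suc q) * x j * T J N (pre @ [j]) q x"
proof (induction q arbitrary: pre)
  case 0
  have "T J N pre (Suc 0) x - T J N pre (Suc 0) (flip x j) =
        (\<Sum>k<N. (if k = j then 2 * x j * J (pre @ [j]) else 0))"
    unfolding T_Suc T_0 sum_subtractf[symmetric]
    by (rule sum.cong) (auto simp: algebra_simps)
  also have "\<dots> = 2 * x j * J (pre @ [j])" using j by simp
  finally show ?case by (simp add: T_0)
next
  case (Suc q)
  let ?t = "\<lambda>pre'. T J N pre' (Suc q)"
  have pk: "\<And>k. k < N \<Longrightarrow> length (pre @ [k]) + Suc q = p \<and> set (pre @ [k]) \<subseteq> {..<N}"
    using Suc.prems by auto
  have ih: "\<And>k. k < N \<Longrightarrow> ?t (pre @ [k]) x - ?t (pre @ [k]) (flip x j)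
     = 2 * real (Suc q) * x j * T J N (pre @ [k, j]) q x"
    using Suc.IH pk by simp
  have dz: "T J N (pre @ [j, j]) q x = 0"
    by (rule T_diag[OF v _ _ j]) (use Suc.prems in auto)
  have tm: "\<And>k. k < N \<Longrightarrow> x k * ?t (pre @ [k]) x - flip x j k * ?t (pre @ [k]) (flip x j)
     = x k * (2 * real (Suc q) * x j * T J N (pre @ [k, j]) q x)
       + (if k = j then 2 * x j * ?t (pre @ [j]) x else 0)"
  proof -
    fix k assume k: "k < N"
    show "?thesis k"
    proof (cases "k = j")
      case True
      have "?t (pre @ [j]) (flip x j) = ?t (pre @ [j]) x" using ih[OF j] dz by simp
      thus ?thesis using True dz by simp
    next
      case False
      thus ?thesis using ih[OF k] by (simp add: algebra_simps)
    qed
  qed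
  have "T J N pre (Suc (Suc q)) x - T J N pre (Suc (Suc q)) (flip x j)
      = (\<Sum>k<N. x k * (2 * real (Suc q) * x j * T J N (pre @ [k, j]) q x)
       + (if k = j then 2 * x j * ?t (pre @ [j]) x else 0))"
    unfolding T_Suc[of J N pre "Suc q"] sum_subtractf[symmetric]
    by (rule sum.cong) (auto simp: tm)
  also have "\<dots> = 2 * real (Suc q) * x j * (\<Sum>k<N. x k * T J N (pre @ [j, k]) q x)
       + 2 * x j * ?t (pre @ [j]) x"
  proof -
    have "(\<Sum>k<N. x k * (2 * real (Suc q) * x j * T J N (pre @ [k, j]) q x))
       = (\<Sum>k<N. 2 * real (Suc q) * x j * (x k * T J N (pre @ [j, k]) q x))"
      by (rule sum.cong[OF refl]) (use T_swap[OF v _ Suc.prems(2) _ j] Suc.prems(1) in auto)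
    thus ?thesis unfolding sum.distrib using j by (simp add: sum_distrib_left[symmetric])
  qed
  also have "(\<Sum>k<N. x k * T J N (pre @ [j, k]) q x) = ?t (pre @ [j]) x"
    by (simp add: T_Suc)
  finally show ?case by (simp add: algebra_simps)
qed


context
  fixes p N :: nat and J :: "nat list \<Rightarrow> real"
  assumes v: "valid_tensor p N J" and p2: "p \<ge> 2"
begin

lemma ham_T: "hamiltonian p N J x = T J N [] p x"
  unfolding hamiltonian_def T_def by simp

lemma lf_T: "local_field p N J x i = T J N [i] (p - 1) x"
  unfolding local_field_def T_def by simp

lemma lm_T: "local_matrix p N J x i k = T J N [i, k] (p - 2) x"
  unfolding local_matrix_def T_def by simp

lemma ham_sum: "hamiltonian p N J x = (\<Sum>i<N. x i * local_field p N J x i)"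
proof -
  have "p = Suc (p - 1)" using p2 by simp
  hence "T J N [] p x = T J N [] (Suc (p - 1)) x" by simp
  thus ?thesis unfolding ham_T lf_T T_Suc by simp
qed

lemma lf_sum: "local_field p N J x i = (\<Sum>k<N. x k * local_matrix p N J x i k)"
proof -
  have "p - 1 = Suc (p - 2)" using p2 by simp
  thus ?thesis unfolding lf_T lm_T by (simp add: T_Suc)
qed

lemma ham_flip: "i < N \<Longrightarrow>
  hamiltonian p N J x - hamiltonian p N J (flip x i) = 2 * real p * x i * local_field p N J x i"
proof -
  assume i: "i < N"
  have e: "p = Suc (p - 1)" using p2 by simp
  have "T J N [] (Suc (p - 1)) x - T J N [] (Suc (p - 1)) (flip x i)
     = 2 * real (Suc (p - 1)) * x i * T J N ([] @ [i]) (p - 1) x"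
    by (rule T_flip[OF v i]) (use p2 in auto)
  thus ?thesis unfolding ham_T lf_T using e by (metis append_Nil)
qed

lemma lf_flip: "i < N \<Longrightarrow> k < N \<Longrightarrow>
  local_field p N J x i - local_field p N J (flip x k) i = 2 * (real p - 1) * x k * local_matrix p N J x i k"
proof -
  assume i: "i < N" and k: "k < N"
  have e: "p - 1 = Suc (p - 2)" using p2 by simp
  have "T J N [i] (Suc (p - 2)) x - T J N [i] (Suc (p - 2)) (flip x k)
     = 2 * real (Suc (p - 2)) * x k * T J N ([i] @ [k]) (p - 2) x"
    by (rule T_flip[OF v k]) (use p2 i in auto)
  moreover have "real (Suc (p - 2)) = real p - 1" using p2 by (simp add: of_nat_diff)
  ultimately show ?thesis unfolding lf_T lm_T using e by simp
qed

lemma lm_diag: "i < N \<Longrightarrow> local_matrix p N J x i i = 0"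
  unfolding lm_T using T_diag[OF v, of "[]" "p - 2" i x] p2 by simp

lemma lf_flip_self: "i < N \<Longrightarrow> local_field p N J (flip x i) i = local_field p N J x i"
  using lf_flip[of i i x] lm_diag[of i x] by simp

end

lemma spins_0: "spins 0 = {\<lambda>_. 0}" unfolding spins_def by auto

lemma spins_Suc: "spins (Suc N) = (\<lambda>x. x(N := 1)) ` spins N \<union> (\<lambda>x. x(N := -1)) ` spins N"
proof (intro equalityI subsetI)
  fix x assume x: "x \<in> spins (Suc N)"
  let ?y = "x(N := 0)"
  have y: "?y \<in> spins N" using x unfolding spins_def by auto
  have "x N = 1 \<or> x N = -1" using x unfolding spins_def by auto
  moreover have "x = ?y(N := x N)" by simp
  ultimately show "x \<in> (\<lambda>x. x(N := 1)) ` spins N \<union> (\<lambda>x. x(N := -1)) ` spins N"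
    using y by (metis UnI1 UnI2 image_eqI)
qed (auto simp: spins_def less_Suc_eq)

lemma finite_card_spins: "finite (spins N) \<and> card (spins N) = 2 ^ N"
proof (induction N)
  case 0 thus ?case by (simp add: spins_0)
next
  case (Suc N)
  have inj1: "inj_on (\<lambda>x. x(N := c)) (spins N)" for c :: real
  proof (rule inj_onI)
    fix x y assume "x \<in> spins N" "y \<in> spins N" "x(N := c) = y(N := c)"
    show "x = y"
    proof
      fix i show "x i = y i"
      proof (cases "i = N")
        case True thus ?thesis using \<open>x \<in> spins N\<close> \<open>y \<in> spins N\<close> unfolding spins_def by auto
      next
        case False thus ?thesis using fun_cong[OF \<open>x(N := c) = y(N := c)\<close>, of i] by simp
      qed
    qed
  qed
  have disj: "(\<lambda>x. x(N := 1)) ` spins N \<inter> (\<lambda>x. x(N := -1)) ` spins N = {}"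
  proof (rule ccontr)
    assume "\<not> ?thesis"
    then obtain z where "z \<in> (\<lambda>x. x(N := 1)) ` spins N" "z \<in> (\<lambda>x. x(N := -1)) ` spins N" by blast
    then obtain x y where "z = x(N := 1)" "z = y(N := -1)" by blast
    hence "x(N := 1) = y(N := -1)" by simp
    from fun_cong[OF this, of N] show False by simp
  qed
  have f: "finite (spins (Suc N))" unfolding spins_Suc using Suc by simp
  have "card (spins (Suc N)) = card ((\<lambda>x. x(N := 1)) ` spins N) + card ((\<lambda>x. x(N := -1)) ` spins N)"
    unfolding spins_Suc using Suc disj by (simp add: card_Un_disjoint)
  also have "\<dots> = 2 ^ Suc N" using Suc by (simp add: card_image[OF inj1])
  finally show ?case using f by simp
qed

lemma finite_spins: "finite (spins N)" using finite_card_spins by blast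
lemma card_spins: "card (spins N) = 2 ^ N" using finite_card_spins by blast

lemma spin_val: "x \<in> spins N \<Longrightarrow> i < N \<Longrightarrow> x i = 1 \<or> x i = -1" unfolding spins_def by auto
lemma spin_abs: "x \<in> spins N \<Longrightarrow> i < N \<Longrightarrow> \<bar>x i\<bar> = 1" using spin_val by fastforce
lemma spin_sq: "x \<in> spins N \<Longrightarrow> i < N \<Longrightarrow> (x i)\<^sup>2 = 1" using spin_val by fastforce

lemma one_spin: "(\<lambda>i. if i < N then 1 else 0) \<in> spins N" unfolding spins_def by auto

lemma flip_spins: "x \<in> spins N \<Longrightarrow> i < N \<Longrightarrow> flip x i \<in> spins N"
  unfolding spins_def flip_def by auto

lemma flip_flip[simp]: "flip (flip x i) i = x" unfolding flip_def by auto

lemma sum_flip: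
  assumes i: "i < N"
  shows "(\<Sum>x\<in>spins N. f x) = (\<Sum>x\<in>spins N. f (flip x i))"
proof -
  have inj: "inj_on (\<lambda>x. flip x i) (spins N)" by (metis flip_flip inj_onI)
  have im: "(\<lambda>x. flip x i) ` spins N = spins N"
  proof
    show "(\<lambda>x. flip x i) ` spins N \<subseteq> spins N" using flip_spins[OF _ i] by blast
    show "spins N \<subseteq> (\<lambda>x. flip x i) ` spins N"
    proof
      fix x assume x: "x \<in> spins N"
      hence "flip x i \<in> spins N" by (rule flip_spins[OF _ i])
      moreover have "x = flip (flip x i) i" by simp
      ultimately show "x \<in> (\<lambda>x. flip x i) ` spins N" by blast
    qed
  qed
  show ?thesis using sum.reindex[OF inj, of f] im by simp
qed

lemma sum_sq_spin: "x \<in> spins N \<Longrightarrow> (\<Sum>k<N. (x k)\<^sup>2) = real N"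
  by (simp add: spin_sq)

context
  fixes p N :: nat and J :: "nat list \<Rightarrow> real" and \<beta> :: real
  assumes v: "valid_tensor p N J" and p2: "p \<ge> 2"
begin

definition Zs where "Zs = (\<Sum>x\<in>spins N. exp (\<beta> * hamiltonian p N J x))"

lemma Zs_pos: "Zs > 0"
  unfolding Zs_def using one_spin[of N] finite_spins[of N]
  by (intro sum_pos2) auto

lemma gibbs_eq: "gibbs p N J \<beta> x = exp (\<beta> * hamiltonian p N J x) / Zs"
  unfolding gibbs_def partition_fn_def Zs_def by simp

lemma gibbs_nonneg: "gibbs p N J \<beta> x \<ge> 0"
  unfolding gibbs_eq using Zs_pos by simp

lemma gibbs_sum: "(\<Sum>x\<in>spins N. gibbs p N J \<beta> x) = 1"
  unfolding gibbs_eq sum_divide_distrib[symmetric] using Zs_pos by (simp add: Zs_def)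

lemma tanh_identity: "(s::real) = 1 \<or> s = -1 \<Longrightarrow>
   exp (- 2 * a * s) * (- s - tanh a) = - (s - tanh a)"
proof -
  assume s: "s = 1 \<or> s = -1"
  define e where "e = exp (- 2 * a)"
  have e: "e > 0" unfolding e_def by simp
  have t: "tanh a = (1 - e) / (1 + e)" unfolding e_def by (rule tanh_real_altdef)
  have e2: "exp (2 * a) = 1 / e" unfolding e_def by (simp add: exp_minus divide_inverse)
  have e1: "exp (- 2 * a * 1) = e" unfolding e_def by simp
  have e3: "exp (- 2 * a * (-1)) = 1 / e" using e2 by simp
  show ?thesis using s
  proof
    assume s1: "s = 1" show ?thesis unfolding s1 e1 t using e by (simp add: field_simps)
  next
    assume s1: "s = -1" show ?thesis unfolding s1 e3 t using e by (simp add: field_simps)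
  qed
qed

lemma zero_mean:
  assumes i: "i < N" and f: "\<And>x. x \<in> spins N \<Longrightarrow> f (flip x i) = f x"
  shows "(\<Sum>x\<in>spins N. gibbs p N J \<beta> x *
      ((x i - tanh (real p * \<beta> * local_field p N J x i)) * f x)) = 0"
proof -
  define g where "g x = exp (\<beta> * hamiltonian p N J x) *
      ((x i - tanh (real p * \<beta> * local_field p N J x i)) * f x)" for x
  have anti: "g (flip x i) = - g x" if x: "x \<in> spins N" for x
  proof -
    let ?m = "local_field p N J x i"
    have h: "hamiltonian p N J (flip x i) = hamiltonian p N J x - 2 * real p * x i * ?m"
      using ham_flip[OF v p2 i, of x] by simp
    have m: "local_field p N J (flip x i) i = ?m" using lf_flip_self[OF v p2 i] .
    have "g (flip x i) = exp (\<beta> * hamiltonian p N J x) * (exp (- 2 * (real p * \<beta> * ?m) * x i)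
        * (- x i - tanh (real p * \<beta> * ?m))) * f x"
    proof -
      have "exp (\<beta> * (hamiltonian p N J x - 2 * real p * x i * ?m)) =
          exp (\<beta> * hamiltonian p N J x) * exp (- 2 * (real p * \<beta> * ?m) * x i)"
        by (subst exp_add[symmetric]) (simp add: algebra_simps)
      thus ?thesis unfolding g_def h m f[OF x] by simp
    qed
    also have "\<dots> = exp (\<beta> * hamiltonian p N J x) * (- (x i - tanh (real p * \<beta> * ?m))) * f x"
      by (simp only: tanh_identity[OF spin_val[OF x i], of "real p * \<beta> * ?m"])
    also have "\<dots> = - g x" unfolding g_def by (simp add: algebra_simps)
    finally show ?thesis .
  qed
  have "(\<Sum>x\<in>spins N. g x) = (\<Sum>x\<in>spins N. g (flip x i))" by (rule sum_flip[OF i])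
  also have "\<dots> = - (\<Sum>x\<in>spins N. g x)" by (simp add: anti sum_negf)
  finally have "(\<Sum>x\<in>spins N. g x) = 0" by simp
  thus ?thesis unfolding gibbs_eq g_def
    by (simp add: sum_divide_distrib[symmetric])
qed

end

lemma lip_bound:
  fixes f f' :: "real \<Rightarrow> real"
  assumes d: "\<And>z. (f has_field_derivative f' z) (at z)" and b: "\<And>z. \<bar>f' z\<bar> \<le> B"
  shows "\<bar>f x - f y\<bar> \<le> B * \<bar>x - y\<bar>"
  using field_differentiable_bound[of UNIV f f' B x y] d b by auto

lemma sech2_eq: "1 - tanh z ^ 2 = 4 / (exp z + exp (- z))\<^sup>2" for z :: real
proof -
  define a where "a = exp z" define b where "b = exp (-z)"
  have p: "a + b > 0" unfolding a_def b_def by (simp add: add_pos_pos)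
  have ab: "a * b = 1" unfolding a_def b_def by (simp add: exp_minus)
  have "1 - ((a - b) / (a + b))\<^sup>2 = ((a + b)\<^sup>2 - (a - b)\<^sup>2) / (a + b)\<^sup>2"
    using p by (simp add: field_simps)
  also have "(a + b)\<^sup>2 - (a - b)\<^sup>2 = 4 * (a * b)" by (simp add: power2_eq_square algebra_simps)
  finally show ?thesis unfolding tanh_altdef a_def[symmetric] b_def[symmetric] ab by simp
qed

lemma sech2_bounds: "0 \<le> 1 - tanh z ^ 2" "1 - tanh z ^ 2 \<le> 1" for z :: real
proof -
  have "\<bar>tanh z\<bar> < 1" using tanh_real_bounds[of z] by auto
  hence "tanh z ^ 2 < 1" by (simp add: abs_square_less_1)
  thus "0 \<le> 1 - tanh z ^ 2" by simp
  show "1 - tanh z ^ 2 \<le> 1" by simp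
qed

lemma sech2_lin: "\<bar>z\<bar> * (1 - tanh z ^ 2) \<le> 2" for z :: real
proof -
  define s where "s = exp z + exp (- z)"
  have e1: "1 + z \<le> exp z" "1 + (-z) \<le> exp (-z)" using exp_ge_add_one_self by blast+
  have a: "s \<ge> 2" unfolding s_def using e1 by linarith
  have e2: "0 < exp z" "0 < exp (-z)" by auto
  have b: "s \<ge> 1 + \<bar>z\<bar>" unfolding s_def
    using e1 e2 by (smt (verit))
  have "s\<^sup>2 \<ge> 2 * (1 + \<bar>z\<bar>)" unfolding power2_eq_square using a b
    by (metis mult_mono' abs_ge_zero add_nonneg_nonneg zero_le_numeral zero_le_one)
  hence "\<bar>z\<bar> * (4 / s\<^sup>2) \<le> 2" using a
    by (simp add: field_simps)
  thus ?thesis unfolding sech2_eq s_def .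
qed

definition psi :: "real \<Rightarrow> real \<Rightarrow> real" where "psi c y = y * tanh (c * y)"
definition psi1 :: "real \<Rightarrow> real \<Rightarrow> real" where
  "psi1 c y = tanh (c * y) + c * y * (1 - tanh (c * y) ^ 2)"
definition psi2 :: "real \<Rightarrow> real \<Rightarrow> real" where
  "psi2 c y = 2 * c * (1 - tanh (c * y) ^ 2) * (1 - c * y * tanh (c * y))"

lemma psi_deriv: "(psi c has_field_derivative psi1 c y) (at y)"
  unfolding psi_def psi1_def
  by (auto intro!: derivative_eq_intros simp: algebra_simps)

lemma psi1_deriv: "(psi1 c has_field_derivative psi2 c y) (at y)"
  unfolding psi1_def psi2_def
  by (auto intro!: derivative_eq_intros simp: algebra_simps power2_eq_square)

lemma psi1_bound: "\<bar>psi1 c y\<bar> \<le> 3"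
proof -
  have "\<bar>tanh (c*y)\<bar> \<le> 1" using tanh_real_bounds[of "c*y"] by auto
  moreover have "\<bar>c * y * (1 - tanh (c * y) ^ 2)\<bar> \<le> 2"
    using sech2_lin[of "c*y"] sech2_bounds(1)[of "c*y"] by (simp add: abs_mult)
  ultimately show ?thesis unfolding psi1_def by linarith
qed

lemma psi2_bound: assumes c: "c \<ge> 0" shows "\<bar>psi2 c y\<bar> \<le> 6 * c"
proof -
  let ?T = "tanh (c*y)" and ?S = "1 - tanh (c*y) ^ 2"
  have T: "\<bar>?T\<bar> \<le> 1" using tanh_real_bounds[of "c*y"] by auto
  have S: "0 \<le> ?S" "?S \<le> 1" using sech2_bounds by auto
  have L: "\<bar>c*y\<bar> * ?S \<le> 2" by (rule sech2_lin)
  have "\<bar>?S * (1 - c * y * ?T)\<bar> = ?S * \<bar>1 - c * y * ?T\<bar>" using S by (simp add: abs_mult)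
  also have "\<dots> \<le> ?S * (1 + \<bar>c*y\<bar> * \<bar>?T\<bar>)"
  proof (rule mult_left_mono[OF _ S(1)])
    have "\<bar>1 - c * y * ?T\<bar> \<le> \<bar>1\<bar> + \<bar>c * y * ?T\<bar>" by (rule abs_triangle_ineq4)
    thus "\<bar>1 - c * y * ?T\<bar> \<le> 1 + \<bar>c*y\<bar> * \<bar>?T\<bar>" by (simp add: abs_mult)
  qed
  also have "\<dots> = ?S + \<bar>c*y\<bar> * ?S * \<bar>?T\<bar>" by (simp add: algebra_simps)
  also have "\<dots> \<le> 1 + 2 * 1"
    using S L T by (intro add_mono mult_mono) auto
  finally have "\<bar>?S * (1 - c * y * ?T)\<bar> \<le> 3" by simp
  hence "c * \<bar>?S * (1 - c * y * ?T)\<bar> \<le> c * 3" using c by (rule mult_left_mono)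
  moreover have "psi2 c y = 2 * (c * (?S * (1 - c*y*?T)))" unfolding psi2_def by (simp add: mult_ac)
  ultimately show ?thesis using c by (simp add: abs_mult mult_ac)
qed

lemma psi_taylor:
  assumes c: "c \<ge> 0"
  shows "\<bar>psi c y - psi c (y - d) - psi1 c y * d\<bar> \<le> 6 * c * d\<^sup>2"
proof -
  define g where "g t = psi c y - psi c (y - t) - psi1 c y * t" for t
  define g' where "g' t = psi1 c (y - t) - psi1 c y" for t
  let ?S = "{min 0 d .. max 0 d}"
  have gd: "(g has_field_derivative g' t) (at t within ?S)" for t
  proof -
    have "((\<lambda>t. psi c (y - t)) has_field_derivative psi1 c (y - t) * (-1)) (at t)"
      unfolding psi_def psi1_def
      by (auto intro!: derivative_eq_intros simp: algebra_simps)
    hence "(g has_field_derivative g' t) (at t)"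
      unfolding g_def g'_def by (auto intro!: derivative_eq_intros)
    thus ?thesis by (rule has_field_derivative_at_within)
  qed
  have gb: "norm (g' t) \<le> 6 * c * \<bar>d\<bar>" if t: "t \<in> ?S" for t
  proof -
    have "\<bar>psi1 c (y - t) - psi1 c y\<bar> \<le> 6 * c * \<bar>(y - t) - y\<bar>"
      by (rule lip_bound[OF psi1_deriv psi2_bound[OF c]])
    also have "\<dots> \<le> 6 * c * \<bar>d\<bar>" using t c by (intro mult_left_mono) auto
    finally show ?thesis unfolding g'_def by simp
  qed
  have "norm (g d - g 0) \<le> 6 * c * \<bar>d\<bar> * norm (d - 0)"
    by (rule field_differentiable_bound[of ?S g g']) (use gd gb in auto)
  moreover have "g 0 = 0" unfolding g_def by simp
  ultimately show ?thesis unfolding g_def by (simp add: power2_eq_square)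
qed

lemma tanh_incr:
  fixes u v :: real
  assumes "0 \<le> u" "u \<le> v"
  shows "tanh v - tanh u \<ge> (v - u) * (1 - tanh v ^ 2)"
proof (cases "u = v")
  case True thus ?thesis by simp
next
  case False
  hence uv: "u < v" using assms by simp
  have "\<exists>z. u < z \<and> z < v \<and> tanh v - tanh u = (v - u) * (1 - tanh z ^ 2)"
    by (rule MVT2[OF uv]) (auto intro!: derivative_eq_intros)
  then obtain z where z: "u < z" "z < v" "tanh v - tanh u = (v - u) * (1 - tanh z ^ 2)" by blast
  have "0 \<le> tanh z" "tanh z \<le> tanh v" using z assms by auto
  hence "tanh z ^ 2 \<le> tanh v ^ 2" by (simp add: power_mono)
  thus ?thesis unfolding z(3) using uv by (intro mult_left_mono) auto
qed


definition unitb :: "nat \<Rightarrow> (nat \<Rightarrow> real) set" where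
  "unitb N = {v :: nat \<Rightarrow> real. (\<Sum>j<N. (v j)\<^sup>2) \<le> 1}"

lemma op_norm_alt: "op_norm N A = (SUP v\<in>unitb N. sqrt (\<Sum>i<N. (\<Sum>j<N. A i j * v j)\<^sup>2))"
  unfolding op_norm_def unitb_def ..

lemma opn_bdd: "bdd_above ((\<lambda>v. sqrt (\<Sum>i<N. (\<Sum>j<N. A i j * v j)\<^sup>2)) ` unitb N)"
proof (rule bdd_aboveI2)
  fix v assume v: "v \<in> unitb N"
  have vj: "\<bar>v j\<bar> \<le> 1" if j: "j < N" for j
  proof -
    have "(v j)\<^sup>2 \<le> (\<Sum>j<N. (v j)\<^sup>2)" using j by (intro member_le_sum) auto
    also have "\<dots> \<le> 1" using v unfolding unitb_def by simp
    finally show ?thesis by (simp add: abs_square_le_1)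
  qed
  have "(\<Sum>j<N. A i j * v j)\<^sup>2 \<le> (\<Sum>j<N. \<bar>A i j\<bar>)\<^sup>2" for i
  proof -
    have "\<bar>\<Sum>j<N. A i j * v j\<bar> \<le> (\<Sum>j<N. \<bar>A i j * v j\<bar>)" by (rule sum_abs)
    also have "\<dots> \<le> (\<Sum>j<N. \<bar>A i j\<bar>)" using vj
      by (intro sum_mono) (auto simp: abs_mult intro: mult_left_le)
    finally show ?thesis by (metis abs_ge_zero abs_le_square_iff order_trans abs_of_nonneg sum_nonneg)
  qed
  hence "(\<Sum>i<N. (\<Sum>j<N. A i j * v j)\<^sup>2) \<le> (\<Sum>i<N. (\<Sum>j<N. \<bar>A i j\<bar>)\<^sup>2)" by (intro sum_mono)
  thus "sqrt (\<Sum>i<N. (\<Sum>j<N. A i j * v j)\<^sup>2) \<le> sqrt (\<Sum>i<N. (\<Sum>j<N. \<bar>A i j\<bar>)\<^sup>2)" by simp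
qed

lemma opn_upper: "v \<in> unitb N \<Longrightarrow> sqrt (\<Sum>i<N. (\<Sum>j<N. A i j * v j)\<^sup>2) \<le> op_norm N A"
  unfolding op_norm_alt by (rule cSUP_upper[OF _ opn_bdd[where N=N and A=A]])

lemma zero_unitb: "(\<lambda>_. 0) \<in> unitb N" unfolding unitb_def by simp

lemma opn_nonneg: "op_norm N A \<ge> 0"
  using opn_upper[OF zero_unitb, where A=A] by simp

lemma opn_main: "(\<Sum>i<N. (\<Sum>j<N. A i j * v j)\<^sup>2) \<le> (op_norm N A)\<^sup>2 * (\<Sum>j<N. (v j)\<^sup>2)"
proof (cases "(\<Sum>j<N. (v j)\<^sup>2) = 0")
  case True
  hence "\<forall>j\<in>{..<N}. (v j)\<^sup>2 = 0" by (subst sum_nonneg_eq_0_iff[symmetric]) auto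
  hence "(\<Sum>i<N. (\<Sum>j<N. A i j * v j)\<^sup>2) = 0" by simp
  thus ?thesis using True by simp
next
  case False
  define s where "s = (\<Sum>j<N. (v j)\<^sup>2)"
  have s: "s > 0" using False unfolding s_def by (metis less_eq_real_def sum_nonneg zero_le_power2)
  define u where "u j = v j / sqrt s" for j
  have "(\<Sum>j<N. (u j)\<^sup>2) = (\<Sum>j<N. (v j)\<^sup>2) / s"
    unfolding u_def using s by (simp add: power_divide sum_divide_distrib)
  hence "u \<in> unitb N" unfolding unitb_def s_def[symmetric] using s by simp
  hence "sqrt (\<Sum>i<N. (\<Sum>j<N. A i j * u j)\<^sup>2) \<le> op_norm N A" by (rule opn_upper)
  moreover have "(\<Sum>i<N. (\<Sum>j<N. A i j * u j)\<^sup>2) = (\<Sum>i<N. (\<Sum>j<N. A i j * v j)\<^sup>2) / s"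
    unfolding u_def using s
    by (simp add: sum_divide_distrib[symmetric] power_divide times_divide_eq_right)
  ultimately have "sqrt ((\<Sum>i<N. (\<Sum>j<N. A i j * v j)\<^sup>2) / s) \<le> op_norm N A" by simp
  hence "(\<Sum>i<N. (\<Sum>j<N. A i j * v j)\<^sup>2) / s \<le> (op_norm N A)\<^sup>2"
    by (metis real_sqrt_le_iff real_sqrt_pow2_iff sqrt_le_D)
  thus ?thesis unfolding s_def[symmetric] using s by (simp add: field_simps)
qed

lemma opn_col: assumes j: "j < N" shows "(\<Sum>i<N. (A i j)\<^sup>2) \<le> (op_norm N A)\<^sup>2"
proof -
  define e where "e k = (if k = j then 1 else (0::real))" for k
  have "(\<Sum>i<N. (\<Sum>k<N. A i k * e k)\<^sup>2) \<le> (op_norm N A)\<^sup>2 * (\<Sum>k<N. (e k)\<^sup>2)" by (rule opn_main)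
  moreover have "(\<Sum>k<N. A i k * e k) = A i j" for i
    using j unfolding e_def by (simp add: if_distrib cong: if_cong)
  moreover have "(\<Sum>k<N. (e k)\<^sup>2) = 1"
  proof -
    have "(\<Sum>k<N. (e k)\<^sup>2) = (\<Sum>k<N. (if k = j then 1 else 0))"
      unfolding e_def by (rule sum.cong) auto
    thus ?thesis using j by simp
  qed
  ultimately show ?thesis by simp
qed

lemma opn_bilin:
  "\<bar>\<Sum>i<N. \<Sum>j<N. b i * A i j * a j\<bar>
     \<le> op_norm N A * sqrt (\<Sum>i<N. (b i)\<^sup>2) * sqrt (\<Sum>j<N. (a j)\<^sup>2)"
proof -
  define w where "w i = (\<Sum>j<N. A i j * a j)" for i
  have eq: "(\<Sum>i<N. \<Sum>j<N. b i * A i j * a j) = (\<Sum>i<N. b i * w i)"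
    unfolding w_def by (simp add: sum_distrib_left mult.assoc)
  have "(\<Sum>i<N. b i * w i)\<^sup>2 \<le> (\<Sum>i<N. (b i)\<^sup>2) * (\<Sum>i<N. (w i)\<^sup>2)"
    by (rule Cauchy_Schwarz_ineq_sum)
  also have "\<dots> \<le> (\<Sum>i<N. (b i)\<^sup>2) * ((op_norm N A)\<^sup>2 * (\<Sum>j<N. (a j)\<^sup>2))"
    unfolding w_def by (intro mult_left_mono opn_main) (auto intro: sum_nonneg)
  also have "\<dots> = (op_norm N A * sqrt (\<Sum>i<N. (b i)\<^sup>2) * sqrt (\<Sum>j<N. (a j)\<^sup>2))\<^sup>2"
    by (simp add: power_mult_distrib sum_nonneg)
  finally have "(\<Sum>i<N. b i * w i)\<^sup>2 \<le> (op_norm N A * sqrt (\<Sum>i<N. (b i)\<^sup>2) * sqrt (\<Sum>j<N. (a j)\<^sup>2))\<^sup>2" .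
  hence "\<bar>\<Sum>i<N. b i * w i\<bar> \<le> \<bar>op_norm N A * sqrt (\<Sum>i<N. (b i)\<^sup>2) * sqrt (\<Sum>j<N. (a j)\<^sup>2)\<bar>"
    by (simp only: abs_le_square_iff)
  thus ?thesis unfolding eq using opn_nonneg[of N A] by (simp add: sum_nonneg abs_mult)
qed

lemma sum_abs_cs: "(\<Sum>i<N. \<bar>f i\<bar>)\<^sup>2 \<le> real N * (\<Sum>i<N. (f i)\<^sup>2)"
proof -
  have "(\<Sum>i<N. 1 * \<bar>f i\<bar>)\<^sup>2 \<le> (\<Sum>i<N. 1\<^sup>2) * (\<Sum>i<N. \<bar>f i\<bar>\<^sup>2)"
    by (rule Cauchy_Schwarz_ineq_sum)
  thus ?thesis by simp
qed

lemma sum_abs_cs': "(\<Sum>i<N. \<bar>f i\<bar>) \<le> sqrt (real N) * sqrt (\<Sum>i<N. (f i)\<^sup>2)"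
proof -
  have "(\<Sum>i<N. \<bar>f i\<bar>) \<le> sqrt ((\<Sum>i<N. \<bar>f i\<bar>)\<^sup>2)" by (simp add: sum_nonneg)
  also have "\<dots> \<le> sqrt (real N * (\<Sum>i<N. (f i)\<^sup>2))" by (rule real_sqrt_le_mono[OF sum_abs_cs])
  finally show ?thesis by (simp add: real_sqrt_mult)
qed


lemma gexp_sum: "finite I \<Longrightarrow> gibbs_expect p N J \<beta> (\<lambda>x. \<Sum>i\<in>I. f i x) = (\<Sum>i\<in>I. gibbs_expect p N J \<beta> (f i))"
  unfolding gibbs_expect_def by (simp add: sum_distrib_left sum.swap[of _ I])

lemma gexp_add: "gibbs_expect p N J \<beta> (\<lambda>x. f x + g x) = gibbs_expect p N J \<beta> f + gibbs_expect p N J \<beta> g"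
  unfolding gibbs_expect_def by (simp add: distrib_left sum.distrib)

context
  fixes p N :: nat and J :: "nat list \<Rightarrow> real" and \<beta> :: real
  assumes v: "valid_tensor p N J" and p2: "p \<ge> 2" and b0: "\<beta> \<ge> 0"
begin

abbreviation "mm x i \<equiv> local_field p N J x i"
abbreviation "MM x \<equiv> local_matrix p N J x"
abbreviation "cc \<equiv> real p * \<beta>"
abbreviation "tt x i \<equiv> tanh (cc * mm x i)"
definition "UU x i = mm x i * (x i - tt x i)"
abbreviation "nrm x \<equiv> op_norm N (MM x)"
abbreviation "EE f \<equiv> gibbs_expect p N J \<beta> f"

lemma gexp_mono: "(\<And>x. x \<in> spins N \<Longrightarrow> f x \<le> g x) \<Longrightarrow> EE f \<le> EE g"
  unfolding gibbs_expect_def using gibbs_nonneg[OF v p2]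
  by (intro sum_mono mult_left_mono) auto

lemma sum_m2: "x \<in> spins N \<Longrightarrow> (\<Sum>i<N. (mm x i)\<^sup>2) \<le> (nrm x)\<^sup>2 * real N"
proof -
  assume x: "x \<in> spins N"
  have "(\<Sum>i<N. (mm x i)\<^sup>2) = (\<Sum>i<N. (\<Sum>k<N. MM x i k * x k)\<^sup>2)"
    by (simp add: lf_sum[OF v p2] mult.commute)
  also have "\<dots> \<le> (nrm x)\<^sup>2 * (\<Sum>k<N. (x k)\<^sup>2)" by (rule opn_main)
  finally show ?thesis using sum_sq_spin[OF x] by simp
qed

lemma xt_bound: "x \<in> spins N \<Longrightarrow> i < N \<Longrightarrow> \<bar>x i - tt x i\<bar> \<le> 2"
  using spin_abs[of x N i] tanh_real_bounds[of "cc * mm x i"] by auto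

lemma diag_bound: "x \<in> spins N \<Longrightarrow> (\<Sum>i<N. (UU x i)\<^sup>2) \<le> 4 * (nrm x)\<^sup>2 * real N"
proof -
  assume x: "x \<in> spins N"
  have "(\<Sum>i<N. (UU x i)\<^sup>2) \<le> (\<Sum>i<N. 4 * (mm x i)\<^sup>2)"
  proof (rule sum_mono)
    fix i assume i: "i \<in> {..<N}"
    have "(x i - tt x i)\<^sup>2 \<le> 2\<^sup>2" using xt_bound[OF x] i
      by (metis abs_le_square_iff abs_numeral lessThan_iff)
    from mult_left_mono[OF this zero_le_power2[of "mm x i"]]
    show "(UU x i)\<^sup>2 \<le> 4 * (mm x i)\<^sup>2" unfolding UU_def power_mult_distrib
      by (simp add: mult.commute)
  qed
  also have "\<dots> \<le> 4 * ((nrm x)\<^sup>2 * real N)" using sum_m2[OF x] by (simp add: sum_distrib_left[symmetric])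
  finally show ?thesis by simp
qed

definition "DD x i j = (x j - tt x j) * (mm x j * (UU x i - UU (flip x j) i) / 2)"

lemma off_eq: assumes i: "i < N" and j: "j < N" and ij: "i \<noteq> j"
  shows "EE (\<lambda>x. UU x i * UU x j) = EE (\<lambda>x. DD x i j)"
proof -
  define g where "g x = mm x j * (UU x i + UU (flip x j) i) / 2" for x
  have ginv: "g (flip x j) = g x" if "x \<in> spins N" for x
    unfolding g_def using lf_flip_self[OF v p2 j] by (simp add: add.commute)
  have z: "(\<Sum>x\<in>spins N. gibbs p N J \<beta> x * ((x j - tt x j) * g x)) = 0"
    by (rule zero_mean[OF v p2 j, where f=g, OF ginv])
  have pw: "UU x i * UU x j = DD x i j + (x j - tt x j) * g x" for x
  proof -
    have "UU x j = mm x j * (x j - tt x j)" by (simp add: UU_def)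
    show ?thesis unfolding DD_def g_def \<open>UU x j = mm x j * (x j - tt x j)\<close> by (simp add: field_simps)
  qed
  show ?thesis unfolding gibbs_expect_def pw distrib_left sum.distrib z by simp
qed

definition "RR x i j = psi cc (mm x i) - psi cc (mm x i - 2 * (real p - 1) * x j * MM x i j)
    - psi1 cc (mm x i) * (2 * (real p - 1) * x j * MM x i j)"

lemma D_expand: assumes x: "x \<in> spins N" and i: "i < N" and j: "j < N" and ij: "i \<noteq> j"
  shows "DD x i j = (x i - psi1 cc (mm x i)) * MM x i j * ((real p - 1) * (x j - tt x j) * mm x j * x j)
              - (x j - tt x j) * mm x j * RR x i j / 2"
    and "\<bar>RR x i j\<bar> \<le> 6 * cc * (2 * (real p - 1) * MM x i j)\<^sup>2"
proof -
  define \<Delta> where "\<Delta> = 2 * (real p - 1) * x j * MM x i j"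
  have mf: "mm (flip x j) i = mm x i - \<Delta>" unfolding \<Delta>_def using lf_flip[OF v p2 i j, of x] by simp
  have xf: "flip x j i = x i" using ij by simp
  define R where "R = psi cc (mm x i) - psi cc (mm x i - \<Delta>) - psi1 cc (mm x i) * \<Delta>"
  have RR: "RR x i j = R" unfolding RR_def R_def \<Delta>_def ..
  have c0: "cc \<ge> 0" using b0 by simp
  have Rb: "\<bar>R\<bar> \<le> 6 * cc * \<Delta>\<^sup>2" unfolding R_def by (rule psi_taylor[OF c0])
  have "\<Delta>\<^sup>2 = (2 * (real p - 1) * MM x i j)\<^sup>2"
    unfolding \<Delta>_def power_mult_distrib using spin_sq[OF x j] by simp
  thus "\<bar>RR x i j\<bar> \<le> 6 * cc * (2 * (real p - 1) * MM x i j)\<^sup>2" using Rb RR by simp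
  have "UU x i - UU (flip x j) i = \<Delta> * (x i - psi1 cc (mm x i)) - R"
    unfolding UU_def mf xf R_def psi_def by (simp add: algebra_simps)
  hence dd: "DD x i j = (x j - tt x j) * (mm x j * (\<Delta> * (x i - psi1 cc (mm x i)) - R) / 2)"
    unfolding DD_def by simp
  show "DD x i j = (x i - psi1 cc (mm x i)) * MM x i j * ((real p - 1) * (x j - tt x j) * mm x j * x j)
              - (x j - tt x j) * mm x j * RR x i j / 2"
    unfolding dd \<Delta>_def RR by (simp add: field_simps)
qed

lemma sq4: "(2 * real p - 2)\<^sup>2 = 4 * (real p - 1)\<^sup>2" by (simp add: power2_eq_square algebra_simps)

lemma sqrt_sq_abs: "sqrt (a\<^sup>2 * b) = \<bar>a\<bar> * sqrt b"
  by (simp add: real_sqrt_mult)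

lemma off_bound: assumes x: "x \<in> spins N"
  shows "\<bar>\<Sum>i<N. \<Sum>j\<in>{..<N}-{i}. DD x i j\<bar>
     \<le> real N * (8 * (real p - 1) * (nrm x)\<^sup>2 + 24 * cc * (real p - 1)\<^sup>2 * (nrm x)^3)"
proof -
  define a where "a j = (real p - 1) * (x j - tt x j) * mm x j * x j" for j
  define b where "b i = x i - psi1 cc (mm x i)" for i
  define A2 where "A2 i j = (x j - tt x j) * mm x j * RR x i j / 2" for i j
  have p1: "real p - 1 \<ge> 0" using p2 by simp
  have n0: "nrm x \<ge> 0" by (rule opn_nonneg)
  have c0: "cc \<ge> 0" using b0 by simp
  have split: "(\<Sum>i<N. \<Sum>j\<in>{..<N}-{i}. DD x i j)
      = (\<Sum>i<N. \<Sum>j<N. b i * MM x i j * a j) - (\<Sum>i<N. \<Sum>j\<in>{..<N}-{i}. A2 i j)"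
  proof -
    have "(\<Sum>j\<in>{..<N}-{i}. DD x i j) = (\<Sum>j<N. b i * MM x i j * a j) - (\<Sum>j\<in>{..<N}-{i}. A2 i j)"
      if i: "i < N" for i
    proof -
      have "(\<Sum>j\<in>{..<N}-{i}. DD x i j) = (\<Sum>j\<in>{..<N}-{i}. b i * MM x i j * a j - A2 i j)"
        by (rule sum.cong) (use D_expand(1)[OF x i] in \<open>auto simp: a_def b_def A2_def\<close>)
      also have "\<dots> = (\<Sum>j\<in>{..<N}-{i}. b i * MM x i j * a j) - (\<Sum>j\<in>{..<N}-{i}. A2 i j)"
        by (simp add: sum_subtractf)
      also have "(\<Sum>j\<in>{..<N}-{i}. b i * MM x i j * a j) = (\<Sum>j<N. b i * MM x i j * a j)"
        using sum.remove[of "{..<N}" i "\<lambda>j. b i * MM x i j * a j"] i lm_diag[OF v p2 i, of x] by simp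
      finally show ?thesis .
    qed
    thus ?thesis by (simp add: sum_subtractf)
  qed
  have bsq: "(\<Sum>i<N. (b i)\<^sup>2) \<le> 16 * real N"
  proof -
    have "(\<Sum>i<N. (b i)\<^sup>2) \<le> (\<Sum>i<N. 16)"
    proof (rule sum_mono)
      fix i assume i: "i \<in> {..<N}"
      have "\<bar>b i\<bar> \<le> 4" unfolding b_def using spin_abs[OF x, of i] i psi1_bound[of cc "mm x i"] by auto
      hence "(b i)\<^sup>2 \<le> 4\<^sup>2" by (metis abs_le_square_iff abs_numeral)
      thus "(b i)\<^sup>2 \<le> 16" by simp
    qed
    thus ?thesis by simp
  qed
  have asq: "(\<Sum>j<N. (a j)\<^sup>2) \<le> (2 * (real p - 1) * nrm x)\<^sup>2 * real N"
  proof -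
    have "(\<Sum>j<N. (a j)\<^sup>2) \<le> (\<Sum>j<N. 4 * (real p - 1)\<^sup>2 * (mm x j)\<^sup>2)"
    proof (rule sum_mono)
      fix j assume j: "j \<in> {..<N}"
      have "(x j - tt x j)\<^sup>2 \<le> 2\<^sup>2" using xt_bound[OF x] j
        by (metis abs_le_square_iff abs_numeral lessThan_iff)
      hence "(x j - tt x j)\<^sup>2 * ((real p - 1)\<^sup>2 * (mm x j)\<^sup>2) \<le> 4 * ((real p - 1)\<^sup>2 * (mm x j)\<^sup>2)"
        by (intro mult_right_mono) auto
      thus "(a j)\<^sup>2 \<le> 4 * (real p - 1)\<^sup>2 * (mm x j)\<^sup>2"
        unfolding a_def power_mult_distrib using spin_sq[OF x, of j] j by (simp add: mult_ac)
    qed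
    also have "\<dots> = 4 * (real p - 1)\<^sup>2 * (\<Sum>j<N. (mm x j)\<^sup>2)" by (simp add: sum_distrib_left)
    also have "\<dots> \<le> 4 * (real p - 1)\<^sup>2 * ((nrm x)\<^sup>2 * real N)"
      by (intro mult_left_mono sum_m2[OF x]) auto
    also have "\<dots> = (2 * (real p - 1) * nrm x)\<^sup>2 * real N" by (simp only: power_mult_distrib) (simp add: mult_ac)
    finally show ?thesis .
  qed
  have T1: "\<bar>\<Sum>i<N. \<Sum>j<N. b i * MM x i j * a j\<bar> \<le> real N * (8 * (real p - 1) * (nrm x)\<^sup>2)"
  proof -
    have "\<bar>\<Sum>i<N. \<Sum>j<N. b i * MM x i j * a j\<bar> \<le> nrm x * sqrt (\<Sum>i<N. (b i)\<^sup>2) * sqrt (\<Sum>j<N. (a j)\<^sup>2)"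
      by (rule opn_bilin)
    also have "\<dots> \<le> nrm x * sqrt (4\<^sup>2 * real N) * sqrt ((2 * (real p - 1) * nrm x)\<^sup>2 * real N)"
      using bsq asq n0 by (intro mult_mono real_sqrt_le_mono) (auto intro: sum_nonneg)
    also have "\<dots> = nrm x * (4 * sqrt (real N)) * ((2 * (real p - 1) * nrm x) * sqrt (real N))"
      unfolding sqrt_sq_abs using p1 n0 by simp
    also have "\<dots> = 8 * (real p - 1) * (nrm x)\<^sup>2 * (sqrt (real N) * sqrt (real N))"
      by (simp add: power2_eq_square mult_ac)
    also have "\<dots> = real N * (8 * (real p - 1) * (nrm x)\<^sup>2)" by simp
    finally show ?thesis .
  qed
  have T2: "\<bar>\<Sum>i<N. \<Sum>j\<in>{..<N}-{i}. A2 i j\<bar> \<le> real N * (24 * cc * (real p - 1)\<^sup>2 * (nrm x)^3)"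
  proof -
    have "\<bar>\<Sum>i<N. \<Sum>j\<in>{..<N}-{i}. A2 i j\<bar> \<le> (\<Sum>i<N. \<Sum>j\<in>{..<N}-{i}. \<bar>A2 i j\<bar>)"
      by (rule order_trans[OF sum_abs]) (intro sum_mono sum_abs)
    also have "\<dots> \<le> (\<Sum>i<N. \<Sum>j<N. 24 * cc * (real p - 1)\<^sup>2 * (\<bar>mm x j\<bar> * (MM x i j)\<^sup>2))"
    proof (rule sum_mono)
      fix i assume i: "i \<in> {..<N}"
      have "(\<Sum>j\<in>{..<N}-{i}. \<bar>A2 i j\<bar>) \<le> (\<Sum>j\<in>{..<N}-{i}. 24 * cc * (real p - 1)\<^sup>2 * (\<bar>mm x j\<bar> * (MM x i j)\<^sup>2))"
      proof (rule sum_mono)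
        fix j assume j: "j \<in> {..<N}-{i}"
        have R: "\<bar>RR x i j\<bar> \<le> 6 * cc * (2 * (real p - 1) * MM x i j)\<^sup>2"
          using D_expand(2)[OF x] i j by auto
        have "\<bar>A2 i j\<bar> = \<bar>x j - tt x j\<bar> * \<bar>mm x j\<bar> * \<bar>RR x i j\<bar> / 2"
          unfolding A2_def by (simp add: abs_mult)
        also have "\<dots> \<le> 2 * \<bar>mm x j\<bar> * (6 * cc * (2 * (real p - 1) * MM x i j)\<^sup>2) / 2"
          using xt_bound[OF x, of j] j R by (intro divide_right_mono mult_mono) auto
        also have "\<dots> = 24 * cc * (real p - 1)\<^sup>2 * (\<bar>mm x j\<bar> * (MM x i j)\<^sup>2)"
          by (simp add: power_mult_distrib sq4)
        finally show "\<bar>A2 i j\<bar> \<le> 24 * cc * (real p - 1)\<^sup>2 * (\<bar>mm x j\<bar> * (MM x i j)\<^sup>2)" .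
      qed
      also have "\<dots> \<le> (\<Sum>j<N. 24 * cc * (real p - 1)\<^sup>2 * (\<bar>mm x j\<bar> * (MM x i j)\<^sup>2))"
        using c0 by (intro sum_mono2) auto
      finally show "(\<Sum>j\<in>{..<N}-{i}. \<bar>A2 i j\<bar>) \<le> (\<Sum>j<N. 24 * cc * (real p - 1)\<^sup>2 * (\<bar>mm x j\<bar> * (MM x i j)\<^sup>2))" .
    qed
    also have "\<dots> = (\<Sum>j<N. \<Sum>i<N. 24 * cc * (real p - 1)\<^sup>2 * (\<bar>mm x j\<bar> * (MM x i j)\<^sup>2))"
      by (rule sum.swap)
    also have "\<dots> = 24 * cc * (real p - 1)\<^sup>2 * (\<Sum>j<N. \<bar>mm x j\<bar> * (\<Sum>i<N. (MM x i j)\<^sup>2))"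
      by (simp only: sum_distrib_left)
    also have "\<dots> \<le> 24 * cc * (real p - 1)\<^sup>2 * (\<Sum>j<N. \<bar>mm x j\<bar> * (nrm x)\<^sup>2)"
      using c0 opn_col by (intro mult_left_mono sum_mono) auto
    also have "\<dots> = 24 * cc * (real p - 1)\<^sup>2 * (nrm x)\<^sup>2 * (\<Sum>j<N. \<bar>mm x j\<bar>)"
      by (simp add: sum_distrib_right mult_ac)
    also have "\<dots> \<le> 24 * cc * (real p - 1)\<^sup>2 * (nrm x)\<^sup>2 * (sqrt (real N) * sqrt ((nrm x)\<^sup>2 * real N))"
    proof (rule mult_left_mono)
      have "(\<Sum>j<N. \<bar>mm x j\<bar>) \<le> sqrt (real N) * sqrt (\<Sum>j<N. (mm x j)\<^sup>2)" by (rule sum_abs_cs')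
      also have "\<dots> \<le> sqrt (real N) * sqrt ((nrm x)\<^sup>2 * real N)"
        using sum_m2[OF x] by (intro mult_left_mono real_sqrt_le_mono) auto
      finally show "(\<Sum>j<N. \<bar>mm x j\<bar>) \<le> sqrt (real N) * sqrt ((nrm x)\<^sup>2 * real N)" .
    qed (use c0 in auto)
    also have "\<dots> = 24 * cc * (real p - 1)\<^sup>2 * (nrm x)\<^sup>2 * (sqrt (real N) * (nrm x * sqrt (real N)))"
      unfolding sqrt_sq_abs using n0 by simp
    also have "\<dots> = 24 * cc * (real p - 1)\<^sup>2 * (nrm x)^3 * (sqrt (real N) * sqrt (real N))"
      by (simp add: power2_eq_square power3_eq_cube mult_ac)
    also have "\<dots> = real N * (24 * cc * (real p - 1)\<^sup>2 * (nrm x)^3)" by simp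
    finally show ?thesis .
  qed
  have tri: "\<bar>(\<Sum>i<N. \<Sum>j<N. b i * MM x i j * a j) - (\<Sum>i<N. \<Sum>j\<in>{..<N}-{i}. A2 i j)\<bar>
     \<le> \<bar>\<Sum>i<N. \<Sum>j<N. b i * MM x i j * a j\<bar> + \<bar>\<Sum>i<N. \<Sum>j\<in>{..<N}-{i}. A2 i j\<bar>"
    by (rule abs_triangle_ineq4)
  have "real N * (8 * (real p - 1) * (nrm x)\<^sup>2 + 24 * cc * (real p - 1)\<^sup>2 * (nrm x)^3)
     = real N * (8 * (real p - 1) * (nrm x)\<^sup>2) + real N * (24 * cc * (real p - 1)\<^sup>2 * (nrm x)^3)"
    by (rule distrib_left)
  thus ?thesis unfolding split using T1 T2 tri by linarith
qed

definition "KK = 4 + 8 * (real p - 1) + 24 * cc * (real p - 1)\<^sup>2"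

lemma pow_bounds: "(y::real) \<ge> 0 \<Longrightarrow> y\<^sup>2 \<le> 1 + y^4 \<and> y^3 \<le> 1 + y^4"
proof -
  assume y: "y \<ge> 0"
  show ?thesis
  proof (cases "y \<le> 1")
    case True
    hence "y\<^sup>2 \<le> 1" "y^3 \<le> 1" using y by (auto intro: power_le_one)
    thus ?thesis by (simp add: add_increasing2)
  next
    case False
    hence "y\<^sup>2 \<le> y^4" "y^3 \<le> y^4" by (auto intro: power_increasing)
    thus ?thesis by auto
  qed
qed

lemma var_bound:
  "EE (\<lambda>x. (\<Sum>i<N. UU x i)\<^sup>2) \<le> real N * KK * EE (\<lambda>x. 1 + (nrm x)^4)"
proof -
  have sq: "(\<Sum>i<N. UU x i)\<^sup>2 = (\<Sum>i<N. (UU x i)\<^sup>2 + (\<Sum>j\<in>{..<N}-{i}. UU x i * UU x j))" for x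
  proof -
    have "(\<Sum>i<N. UU x i)\<^sup>2 = (\<Sum>i<N. \<Sum>j<N. UU x i * UU x j)"
      by (simp add: power2_eq_square sum_product)
    also have "\<dots> = (\<Sum>i<N. (UU x i)\<^sup>2 + (\<Sum>j\<in>{..<N}-{i}. UU x i * UU x j))"
      by (rule sum.cong[OF refl]) (simp add: sum.remove[of "{..<N}"] power2_eq_square)
    finally show ?thesis .
  qed
  have "EE (\<lambda>x. (\<Sum>i<N. UU x i)\<^sup>2)
      = (\<Sum>i<N. EE (\<lambda>x. (UU x i)\<^sup>2) + (\<Sum>j\<in>{..<N}-{i}. EE (\<lambda>x. UU x i * UU x j)))"
    unfolding sq by (simp add: gexp_sum gexp_add)
  also have "\<dots> = (\<Sum>i<N. EE (\<lambda>x. (UU x i)\<^sup>2) + (\<Sum>j\<in>{..<N}-{i}. EE (\<lambda>x. DD x i j)))"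
    by (intro sum.cong refl arg_cong2[where f="(+)"]) (auto intro!: off_eq)
  also have "\<dots> = EE (\<lambda>x. (\<Sum>i<N. (UU x i)\<^sup>2) + (\<Sum>i<N. \<Sum>j\<in>{..<N}-{i}. DD x i j))"
    by (simp add: gexp_sum gexp_add sum.distrib)
  also have "\<dots> \<le> EE (\<lambda>x. real N * KK * (1 + (nrm x)^4))"
  proof (rule gexp_mono)
    fix x assume x: "x \<in> spins N"
    have n0: "nrm x \<ge> 0" by (rule opn_nonneg)
    have pb: "(nrm x)\<^sup>2 \<le> 1 + (nrm x)^4" "(nrm x)^3 \<le> 1 + (nrm x)^4" using pow_bounds[OF n0] by auto
    have p1: "real p - 1 \<ge> 0" using p2 by simp
    have c0: "cc \<ge> 0" using b0 by simp
    have "(\<Sum>i<N. (UU x i)\<^sup>2) + (\<Sum>i<N. \<Sum>j\<in>{..<N}-{i}. DD x i j)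
       \<le> 4 * (nrm x)\<^sup>2 * real N + real N * (8 * (real p - 1) * (nrm x)\<^sup>2 + 24 * cc * (real p - 1)\<^sup>2 * (nrm x)^3)"
      using diag_bound[OF x] off_bound[OF x] by linarith
    also have "\<dots> = real N * (4 * (nrm x)\<^sup>2 + 8 * (real p - 1) * (nrm x)\<^sup>2 + 24 * cc * (real p - 1)\<^sup>2 * (nrm x)^3)"
      by (simp add: algebra_simps)
    also have "\<dots> \<le> real N * (4 * (1 + (nrm x)^4) + 8 * (real p - 1) * (1 + (nrm x)^4) + 24 * cc * (real p - 1)\<^sup>2 * (1 + (nrm x)^4))"
      using pb p1 c0 by (intro mult_left_mono add_mono) auto
    also have "\<dots> = real N * KK * (1 + (nrm x)^4)" unfolding KK_def by (simp add: algebra_simps)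
    finally show "(\<Sum>i<N. (UU x i)\<^sup>2) + (\<Sum>i<N. \<Sum>j\<in>{..<N}-{i}. DD x i j) \<le> real N * KK * (1 + (nrm x)^4)" .
  qed
  also have "\<dots> = real N * KK * EE (\<lambda>x. 1 + (nrm x)^4)"
    unfolding gibbs_expect_def by (simp add: sum_distrib_left mult_ac)
  finally show ?thesis .
qed

end

lemma gp_ind: "gibbs_prob p N J \<beta> E = (\<Sum>x\<in>spins N. if E x then gibbs p N J \<beta> x else 0)"
  unfolding gibbs_prob_def using finite_spins by (simp add: sum.inter_filter)

context
  fixes p N :: nat and J :: "nat list \<Rightarrow> real" and \<beta> :: real
  assumes v: "valid_tensor p N J" and p2: "p \<ge> 2"
begin

lemma markov:
  assumes f: "\<And>x. x \<in> spins N \<Longrightarrow> f x \<ge> 0" and a: "a > 0"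
  shows "gibbs_prob p N J \<beta> (\<lambda>x. f x \<ge> a) \<le> gibbs_expect p N J \<beta> f / a"
proof -
  have "gibbs_prob p N J \<beta> (\<lambda>x. f x \<ge> a) \<le> (\<Sum>x\<in>spins N. gibbs p N J \<beta> x * f x / a)"
    unfolding gp_ind
  proof (rule sum_mono)
    fix x assume x: "x \<in> spins N"
    have w: "gibbs p N J \<beta> x \<ge> 0" by (rule gibbs_nonneg[OF v p2])
    show "(if f x \<ge> a then gibbs p N J \<beta> x else 0) \<le> gibbs p N J \<beta> x * f x / a"
    proof (cases "f x \<ge> a")
      case True
      hence "gibbs p N J \<beta> x * 1 \<le> gibbs p N J \<beta> x * (f x / a)"
        using a w by (intro mult_left_mono) auto
      thus ?thesis using True by simp
    next
      case False thus ?thesis using w f[OF x] a by simp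
    qed
  qed
  thus ?thesis unfolding gibbs_expect_def by (simp add: sum_divide_distrib)
qed

lemma union3:
  assumes "\<And>x. x \<in> spins N \<Longrightarrow> E1 x \<Longrightarrow> E2 x \<Longrightarrow> E3 x \<Longrightarrow> E x"
  shows "gibbs_prob p N J \<beta> E \<ge> 1 - gibbs_prob p N J \<beta> (\<lambda>x. \<not> E1 x)
     - gibbs_prob p N J \<beta> (\<lambda>x. \<not> E2 x) - gibbs_prob p N J \<beta> (\<lambda>x. \<not> E3 x)"
proof -
  have "(\<Sum>x\<in>spins N. gibbs p N J \<beta> x) \<le> (\<Sum>x\<in>spins N. (if E x then gibbs p N J \<beta> x else 0)
      + (if \<not> E1 x then gibbs p N J \<beta> x else 0) + (if \<not> E2 x then gibbs p N J \<beta> x else 0)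
      + (if \<not> E3 x then gibbs p N J \<beta> x else 0))"
    using assms gibbs_nonneg[OF v p2] by (intro sum_mono) auto
  thus ?thesis unfolding gp_ind gibbs_sum[OF v p2] by (simp add: sum.distrib)
qed

lemma pf_pos: "partition_fn p N J \<beta> > 0"
  using Zs_pos[OF v p2, of \<beta>] unfolding partition_fn_def Zs_def[OF v p2] by simp

lemma fe_tail:
  assumes b: "\<beta> \<ge> 0"
  shows "gibbs_prob p N J \<beta> (\<lambda>x. \<not> (\<Sum>i<N. \<bar>local_field p N J x i\<bar>) \<ge> d * real N)
     \<le> exp (\<beta> * d * real N - free_energy p N J \<beta>)"
proof -
  let ?Z = "partition_fn p N J \<beta>"
  have Z: "?Z > 0" by (rule pf_pos)
  have "gibbs_prob p N J \<beta> (\<lambda>x. \<not> (\<Sum>i<N. \<bar>local_field p N J x i\<bar>) \<ge> d * real N)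
      \<le> (\<Sum>x\<in>spins N. exp (\<beta> * (d * real N)) / (2 ^ N * ?Z))"
    unfolding gp_ind
  proof (rule sum_mono)
    fix x assume x: "x \<in> spins N"
    show "(if \<not> (\<Sum>i<N. \<bar>local_field p N J x i\<bar>) \<ge> d * real N then gibbs p N J \<beta> x else 0)
        \<le> exp (\<beta> * (d * real N)) / (2 ^ N * ?Z)"
    proof (cases "(\<Sum>i<N. \<bar>local_field p N J x i\<bar>) \<ge> d * real N")
      case True thus ?thesis using Z by simp
    next
      case False
      have "hamiltonian p N J x = (\<Sum>i<N. x i * local_field p N J x i)" by (rule ham_sum[OF v p2])
      also have "\<dots> \<le> (\<Sum>i<N. \<bar>local_field p N J x i\<bar>)"
      proof (rule sum_mono)
        fix i assume "i \<in> {..<N}"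
        hence "\<bar>x i\<bar> = 1" using spin_abs[OF x] by simp
        hence "x i * local_field p N J x i \<le> \<bar>x i\<bar> * \<bar>local_field p N J x i\<bar>"
          by (metis abs_ge_self abs_mult)
        thus "x i * local_field p N J x i \<le> \<bar>local_field p N J x i\<bar>" using \<open>\<bar>x i\<bar> = 1\<close> by simp
      qed
      finally have "hamiltonian p N J x \<le> d * real N" using False by simp
      hence "exp (\<beta> * hamiltonian p N J x) \<le> exp (\<beta> * (d * real N))"
        using b by (simp add: mult_left_mono)
      thus ?thesis using False Z unfolding gibbs_def by (simp add: divide_right_mono)
    qed
  qed
  also have "\<dots> = exp (\<beta> * (d * real N)) / ?Z"
    using card_spins[of N] Z by simp
  also have "\<dots> = exp (\<beta> * d * real N - free_energy p N J \<beta>)"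
    unfolding free_energy_def using Z by (simp add: exp_diff mult.assoc)
  finally show ?thesis .
qed

end

lemma tanh_mono_term:
  fixes m b1 b2 :: real
  assumes "b1 \<le> b2" "q \<ge> 0"
  shows "m * tanh (q * b1 * m) \<le> m * tanh (q * b2 * m)"
proof (cases "m \<ge> 0")
  case True
  have "q * b1 * m \<le> q * b2 * m" using assms True by (intro mult_right_mono mult_left_mono) auto
  thus ?thesis using True by (intro mult_left_mono) auto
next
  case False
  have "q * b2 * m \<le> q * b1 * m" using assms False
    by (intro mult_right_mono_neg mult_left_mono) auto
  hence "tanh (q * b2 * m) \<le> tanh (q * b1 * m)" by simp
  thus ?thesis using False by (intro mult_left_mono_neg) auto
qed

lemma tanh_abs_term: "m * tanh (a * m) = \<bar>m\<bar> * tanh (a * \<bar>m\<bar>)" for m a :: real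
  by (cases "m \<ge> 0") auto

lemma incr_term:
  fixes m b1 b2 q B K :: real
  assumes b: "0 \<le> b1" "b1 \<le> b2" "b2 \<le> B" and q: "q \<ge> 0" and K: "\<bar>m\<bar> \<le> K"
  shows "m * tanh (q * b2 * m) - m * tanh (q * b1 * m) \<ge> (b2 - b1) * q * (1 - tanh (q * B * K) ^ 2) * m\<^sup>2"
proof -
  let ?u = "q * b1 * \<bar>m\<bar>" and ?v = "q * b2 * \<bar>m\<bar>"
  have uv: "0 \<le> ?u" "?u \<le> ?v" using b q by (auto intro!: mult_right_mono mult_left_mono)
  have "tanh ?v - tanh ?u \<ge> (?v - ?u) * (1 - tanh ?v ^ 2)" by (rule tanh_incr[OF uv])
  moreover have "tanh ?v ^ 2 \<le> tanh (q * B * K) ^ 2"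
  proof -
    have "?v \<le> q * B * K" using b q K by (intro mult_mono) (auto intro: mult_left_mono)
    hence "tanh ?v \<le> tanh (q * B * K)" by simp
    moreover have "0 \<le> tanh ?v" using uv by simp
    ultimately show ?thesis by (simp add: power_mono)
  qed
  ultimately have "tanh ?v - tanh ?u \<ge> (?v - ?u) * (1 - tanh (q * B * K) ^ 2)"
    using uv by (smt (verit) mult_left_mono)
  hence "\<bar>m\<bar> * (tanh ?v - tanh ?u) \<ge> \<bar>m\<bar> * ((?v - ?u) * (1 - tanh (q * B * K) ^ 2))"
    by (intro mult_left_mono) auto
  moreover have "m * tanh (q * b2 * m) - m * tanh (q * b1 * m) = \<bar>m\<bar> * (tanh ?v - tanh ?u)"
    using tanh_abs_term[of m "q * b2"] tanh_abs_term[of m "q * b1"] by (simp add: algebra_simps)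
  moreover have "\<bar>m\<bar> * ((?v - ?u) * (1 - tanh (q * B * K) ^ 2)) = (b2 - b1) * q * (1 - tanh (q * B * K) ^ 2) * m\<^sup>2"
  proof -
    have gen: "\<And>a T :: real. a * ((q * b2 * a - q * b1 * a) * T) = (b2 - b1) * q * T * (a * a)"
      by (simp add: algebra_simps)
    have "\<bar>m\<bar> * ((?v - ?u) * (1 - tanh (q * B * K) ^ 2)) = (b2 - b1) * q * (1 - tanh (q * B * K) ^ 2) * (\<bar>m\<bar> * \<bar>m\<bar>)"
      by (rule gen)
    also have "\<bar>m\<bar> * \<bar>m\<bar> = m\<^sup>2" by (simp add: power2_eq_square)
    finally show ?thesis .
  qed
  ultimately show ?thesis by simp
qed

lemma incr_sum:
  fixes m :: "nat \<Rightarrow> real" and b1 b2 q B K :: real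
  assumes b: "0 \<le> b1" "b1 \<le> b2" "b2 \<le> B" and q: "q \<ge> 0"
  shows "(\<Sum>i<N. m i * tanh (q * b2 * m i)) - (\<Sum>i<N. m i * tanh (q * b1 * m i))
     \<ge> (b2 - b1) * q * (1 - tanh (q * B * K) ^ 2) * (\<Sum>i<N. if \<bar>m i\<bar> \<le> K then (m i)\<^sup>2 else 0)"
proof -
  have "(b2 - b1) * q * (1 - tanh (q * B * K) ^ 2) * (\<Sum>i<N. if \<bar>m i\<bar> \<le> K then (m i)\<^sup>2 else 0)
     = (\<Sum>i<N. (b2 - b1) * q * (1 - tanh (q * B * K) ^ 2) * (if \<bar>m i\<bar> \<le> K then (m i)\<^sup>2 else 0))"
    by (simp add: sum_distrib_left)
  also have "\<dots> \<le> (\<Sum>i<N. m i * tanh (q * b2 * m i) - m i * tanh (q * b1 * m i))"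
  proof (rule sum_mono)
    fix i
    show "(b2 - b1) * q * (1 - tanh (q * B * K) ^ 2) * (if \<bar>m i\<bar> \<le> K then (m i)\<^sup>2 else 0)
        \<le> m i * tanh (q * b2 * m i) - m i * tanh (q * b1 * m i)"
    proof (cases "\<bar>m i\<bar> \<le> K")
      case True thus ?thesis using incr_term[OF b q True] by simp
    next
      case False thus ?thesis using tanh_mono_term[OF b(2) q, of "m i"] by simp
    qed
  qed
  finally show ?thesis by (simp add: sum_subtractf)
qed

lemma mpl_bracket:
  fixes m :: "nat \<Rightarrow> real" and h \<beta> \<epsilon> :: real and q :: real and N :: nat
  defines "g \<equiv> \<lambda>b. (\<Sum>i<N. m i * tanh (q * b * m i))"
  assumes q: "q \<ge> 0" and e: "0 \<le> \<beta> - \<epsilon>" "\<epsilon> > 0"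
    and lo: "h - g (\<beta> - \<epsilon>) > 0" and hi: "h - g (\<beta> + \<epsilon>) < 0"
  shows "ereal (\<beta> - \<epsilon>) \<le> Inf (ereal ` {b. b \<ge> 0 \<and> h = g b})
     \<and> Inf (ereal ` {b. b \<ge> 0 \<and> h = g b}) \<le> ereal (\<beta> + \<epsilon>)"
proof
  have mono: "g b1 \<le> g b2" if "b1 \<le> b2" for b1 b2
    unfolding g_def using tanh_mono_term[OF that q] by (intro sum_mono) auto
  have cont: "continuous_on {\<beta> - \<epsilon> .. \<beta> + \<epsilon>} (\<lambda>b. h - g b)"
    unfolding g_def by (intro continuous_intros) auto
  obtain r where r: "\<beta> - \<epsilon> \<le> r" "r \<le> \<beta> + \<epsilon>" "h - g r = 0"
    using IVT2'[of "\<lambda>b. h - g b" "\<beta> + \<epsilon>" 0 "\<beta> - \<epsilon>", OF _ _ _ cont] lo hi e by auto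
  have "r \<in> {b. b \<ge> 0 \<and> h = g b}" using r e by auto
  hence "Inf (ereal ` {b. b \<ge> 0 \<and> h = g b}) \<le> ereal r" by (intro Inf_lower) auto
  also have "\<dots> \<le> ereal (\<beta> + \<epsilon>)" using r by simp
  finally show "Inf (ereal ` {b. b \<ge> 0 \<and> h = g b}) \<le> ereal (\<beta> + \<epsilon>)" .
  show "ereal (\<beta> - \<epsilon>) \<le> Inf (ereal ` {b. b \<ge> 0 \<and> h = g b})"
  proof (rule Inf_greatest)
    fix y assume "y \<in> ereal ` {b. b \<ge> 0 \<and> h = g b}"
    then obtain b where b: "y = ereal b" "h = g b" by auto
    have "\<beta> - \<epsilon> \<le> b"
    proof (rule ccontr)
      assume "\<not> \<beta> - \<epsilon> \<le> b"
      hence "g b \<le> g (\<beta> - \<epsilon>)" by (intro mono) auto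
      thus False using lo b by simp
    qed
    thus "ereal (\<beta> - \<epsilon>) \<le> y" using b by simp
  qed
qed


lemma det:
  fixes p N :: nat and J :: "nat list \<Rightarrow> real" and \<beta> L d1 K cq s A M :: real and x :: "nat \<Rightarrow> real"
  assumes v: "valid_tensor p N J" and p2: "p \<ge> 2" and bpos: "\<beta> > 0" and N1: "N \<ge> 1"
    and x: "x \<in> spins N" and L: "L > 0" and d1: "d1 > 0"
    and Kd: "K = 2 * L\<^sup>2 / d1" and cqd: "cq = d1\<^sup>2 / 4"
    and sd: "s = 1 - tanh (real p * (2 * \<beta>) * K) ^ 2"
    and Md: "M = A / (real p * s * cq) + 1" and A: "A \<ge> 0"
    and nL: "op_norm N (local_matrix p N J x) < L"
    and ph: "\<bar>\<Sum>i<N. UU p N J \<beta> x i\<bar> < A * sqrt (real N)"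
    and m3: "(\<Sum>i<N. \<bar>local_field p N J x i\<bar>) \<ge> d1 * real N"
    and eps: "M / sqrt (real N) < \<beta>"
  shows "ereal (sqrt (real N)) * \<bar>mpl_estimate p N J x - ereal \<beta>\<bar> \<le> ereal M"
proof -
  let ?m = "\<lambda>i. local_field p N J x i"
  let ?h = "hamiltonian p N J x"
  define g where "g b = (\<Sum>i<N. ?m i * tanh (real p * b * ?m i))" for b
  have b0: "\<beta> \<ge> 0" using bpos by simp
  have Npos: "real N > 0" using N1 by simp
  have sN: "sqrt (real N) > 0" using Npos by simp
  have K: "K > 0" unfolding Kd using L d1 by simp
  have pp: "real p > 0" using p2 by simp
  have s: "s > 0"
  proof -
    have "\<bar>tanh (real p * (2 * \<beta>) * K)\<bar> < 1" using tanh_real_bounds by (simp add: abs_less_iff)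
    hence "tanh (real p * (2 * \<beta>) * K) ^ 2 < 1" by (simp add: abs_square_less_1)
    thus ?thesis unfolding sd by simp
  qed
  have cq: "cq > 0" unfolding cqd using d1 by simp
  have n0: "op_norm N (local_matrix p N J x) \<ge> 0" by (rule opn_nonneg)
  have msq: "(\<Sum>i<N. (?m i)\<^sup>2) \<le> L\<^sup>2 * real N"
  proof -
    have "(\<Sum>i<N. (?m i)\<^sup>2) \<le> (op_norm N (local_matrix p N J x))\<^sup>2 * real N" by (rule sum_m2[OF v p2 b0 x])
    also have "\<dots> \<le> L\<^sup>2 * real N" using nL n0 by (intro mult_right_mono power_mono) auto
    finally show ?thesis .
  qed
  have big: "(\<Sum>i<N. if \<bar>?m i\<bar> \<le> K then 0 else \<bar>?m i\<bar>) \<le> (\<Sum>i<N. (?m i)\<^sup>2) / K"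
    unfolding sum_divide_distrib
  proof (rule sum_mono)
    fix i
    show "(if \<bar>?m i\<bar> \<le> K then 0 else \<bar>?m i\<bar>) \<le> (?m i)\<^sup>2 / K"
    proof (cases "\<bar>?m i\<bar> \<le> K")
      case False
      hence "\<bar>?m i\<bar> * K \<le> \<bar>?m i\<bar> * \<bar>?m i\<bar>" by (intro mult_left_mono) auto
      thus ?thesis using False K by (simp add: field_simps power2_eq_square)
    qed (use K in simp)
  qed
  have spl: "(\<Sum>i<N. \<bar>?m i\<bar>) = (\<Sum>i<N. if \<bar>?m i\<bar> \<le> K then \<bar>?m i\<bar> else 0) + (\<Sum>i<N. if \<bar>?m i\<bar> \<le> K then 0 else \<bar>?m i\<bar>)"
    by (simp add: sum.distrib[symmetric] if_distrib cong: if_cong)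
  have LK: "L\<^sup>2 * real N / K = d1 * real N / 2" unfolding Kd using L d1 by (simp add: field_simps)
  have small: "(\<Sum>i<N. if \<bar>?m i\<bar> \<le> K then \<bar>?m i\<bar> else 0) \<ge> d1 * real N / 2"
  proof -
    have "(\<Sum>i<N. if \<bar>?m i\<bar> \<le> K then 0 else \<bar>?m i\<bar>) \<le> L\<^sup>2 * real N / K"
      using order_trans[OF big divide_right_mono[OF msq]] K by simp
    thus ?thesis using spl m3 LK by linarith
  qed
  define SK where "SK = (\<Sum>i<N. if \<bar>?m i\<bar> \<le> K then (?m i)\<^sup>2 else 0)"
  have SK: "SK \<ge> cq * real N"
  proof -
    define f where "f i = (if \<bar>?m i\<bar> \<le> K then ?m i else 0)" for i
    have cs: "(\<Sum>i<N. \<bar>f i\<bar>)\<^sup>2 \<le> real N * (\<Sum>i<N. (f i)\<^sup>2)" by (rule sum_abs_cs)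
    have e1: "(\<Sum>i<N. \<bar>f i\<bar>) = (\<Sum>i<N. if \<bar>?m i\<bar> \<le> K then \<bar>?m i\<bar> else 0)"
      unfolding f_def by (rule sum.cong) auto
    have e2: "(\<Sum>i<N. (f i)\<^sup>2) = SK" unfolding f_def SK_def by (rule sum.cong) auto
    have "(d1 * real N / 2)\<^sup>2 \<le> (\<Sum>i<N. if \<bar>?m i\<bar> \<le> K then \<bar>?m i\<bar> else 0)\<^sup>2"
      by (rule power_mono[OF small]) (use d1 Npos in simp)
    also have "\<dots> \<le> real N * SK" using cs unfolding e1 e2 .
    finally have "(d1 * real N / 2)\<^sup>2 \<le> real N * SK" .
    hence "real N * (cq * real N) \<le> real N * SK" unfolding cqd by (simp add: power2_eq_square field_simps)
    thus ?thesis using Npos by simp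
  qed
  have hsum: "?h = (\<Sum>i<N. x i * ?m i)" by (rule ham_sum[OF v p2])
  have phg: "(\<Sum>i<N. UU p N J \<beta> x i) = ?h - g \<beta>"
    unfolding hsum g_def UU_def[OF v p2 b0] by (simp add: sum_subtractf algebra_simps)
  define \<epsilon> where "\<epsilon> = M / sqrt (real N)"
  have Mpos: "M > 0" unfolding Md using A pp s cq by (simp add: add_nonneg_pos)
  have e: "\<epsilon> > 0" "\<epsilon> < \<beta>" unfolding \<epsilon>_def using Mpos sN eps by auto
  have gain: "\<epsilon> * real p * s * SK > A * sqrt (real N)"
  proof -
    have "A * sqrt (real N) < (A + real p * s * cq) * sqrt (real N)"
      using pp s cq sN by (simp add: distrib_right)
    also have "A + real p * s * cq = M * (real p * s * cq)"
      unfolding Md using pp s cq by (simp add: field_simps)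
    also have "M * (real p * s * cq) * sqrt (real N) = \<epsilon> * real p * s * (cq * real N)"
    proof -
      define r where "r = sqrt (real N)"
      have rN: "real N = r * r" unfolding r_def using Npos by simp
      have r: "r > 0" unfolding r_def using sN .
      have ec: "\<epsilon> * (cq * real N) = M * cq * r" unfolding \<epsilon>_def r_def[symmetric] rN using r
        by (simp add: field_simps)
      have "M * (real p * s * cq) * r = (real p * s) * (M * cq * r)" by (simp only: mult_ac)
      also have "\<dots> = (real p * s) * (\<epsilon> * (cq * real N))" by (simp only: ec)
      also have "\<dots> = \<epsilon> * real p * s * (cq * real N)" by (simp only: mult_ac)
      finally have "M * (real p * s * cq) * r = \<epsilon> * real p * s * (cq * real N)" .
      thus ?thesis unfolding r_def .
    qed
    also have "\<dots> \<le> \<epsilon> * real p * s * SK"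
      using SK e pp s by (intro mult_left_mono) auto
    finally show ?thesis .
  qed
  have inc1: "g \<beta> - g (\<beta> - \<epsilon>) \<ge> \<epsilon> * real p * s * SK"
  proof -
    have "(\<beta> - (\<beta> - \<epsilon>)) * real p * (1 - tanh (real p * (2 * \<beta>) * K) ^ 2) * SK \<le> g \<beta> - g (\<beta> - \<epsilon>)"
      unfolding g_def SK_def by (rule incr_sum) (use e bpos in auto)
    thus ?thesis unfolding sd[symmetric] by simp
  qed
  have inc2: "g (\<beta> + \<epsilon>) - g \<beta> \<ge> \<epsilon> * real p * s * SK"
  proof -
    have "((\<beta> + \<epsilon>) - \<beta>) * real p * (1 - tanh (real p * (2 * \<beta>) * K) ^ 2) * SK \<le> g (\<beta> + \<epsilon>) - g \<beta>"
      unfolding g_def SK_def by (rule incr_sum) (use e bpos in auto)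
    thus ?thesis unfolding sd[symmetric] by simp
  qed
  have lo: "?h - g (\<beta> - \<epsilon>) > 0" using ph phg inc1 gain by linarith
  have hi: "?h - g (\<beta> + \<epsilon>) < 0" using ph phg inc2 gain by linarith
  have br: "ereal (\<beta> - \<epsilon>) \<le> Inf (ereal ` {b. b \<ge> 0 \<and> ?h = g b})
     \<and> Inf (ereal ` {b. b \<ge> 0 \<and> ?h = g b}) \<le> ereal (\<beta> + \<epsilon>)"
    using mpl_bracket[where q="real p" and \<beta>=\<beta> and \<epsilon>=\<epsilon> and h="?h" and m="?m" and N=N] lo hi e pp unfolding g_def by simp
  have mpl: "mpl_estimate p N J x = Inf (ereal ` {b. b \<ge> 0 \<and> ?h = g b})"
    unfolding mpl_estimate_def g_def ..
  obtain r where r: "mpl_estimate p N J x = ereal r" using br unfolding mpl[symmetric]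
    by (cases "mpl_estimate p N J x") auto
  have "\<bar>r - \<beta>\<bar> \<le> \<epsilon>" using br unfolding mpl[symmetric] r by auto
  hence "sqrt (real N) * \<bar>r - \<beta>\<bar> \<le> sqrt (real N) * \<epsilon>" using sN by (intro mult_left_mono) auto
  also have "sqrt (real N) * \<epsilon> = M" unfolding \<epsilon>_def using sN by simp
  finally show ?thesis unfolding r by simp
qed


lemma key_N:
  fixes p N :: nat and JN :: "nat list \<Rightarrow> real" and \<beta> C c0 \<delta> K0 V L A d1 K cq s M :: real
  assumes v: "valid_tensor p N JN" and p2: "p \<ge> 2" and bpos: "\<beta> > 0" and N1: "N \<ge> 1"
    and \<delta>: "\<delta> > 0" and C0: "C \<ge> 0"
    and E4: "gibbs_expect p N JN \<beta> (\<lambda>z. op_norm N (local_matrix p N JN z) ^ 4) \<le> C"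
    and c0: "c0 > 0" and F: "free_energy p N JN \<beta> / real N > c0"
    and ex: "exp (- (c0 / 2) * real N) < \<delta> / 4"
    and K0d: "K0 = KK p \<beta>"
    and Vd: "V = K0 * (1 + C) + 1"
    and Ld: "L = 1 + 4 * (C + 1) / \<delta>"
    and Ad: "A = 1 + 4 * V / \<delta>"
    and d1d: "d1 = c0 / (2 * \<beta>)"
    and Kd: "K = 2 * L\<^sup>2 / d1" and cqd: "cq = d1\<^sup>2 / 4"
    and sd: "s = 1 - tanh (real p * (2 * \<beta>) * K) ^ 2"
    and Md: "M = A / (real p * s * cq) + 1"
    and eps: "M / sqrt (real N) < \<beta>"
  shows "gibbs_prob p N JN \<beta> (\<lambda>x. ereal (sqrt (real N)) * \<bar>mpl_estimate p N JN x - ereal \<beta>\<bar> \<le> ereal M) > 1 - \<delta>"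
proof -
  have b0: "\<beta> \<ge> 0" using bpos by simp
  have Npos: "real N > 0" using N1 by simp
  have K0: "K0 \<ge> 0" unfolding K0d KK_def[OF v p2 b0] using p2 b0 by simp
  have V: "V \<ge> 1" unfolding Vd using K0 C0 by simp
  have L: "L \<ge> 1" unfolding Ld using C0 \<delta> by simp
  have A: "A \<ge> 1" unfolding Ad using V \<delta> by simp
  have d1: "d1 > 0" unfolding d1d using c0 bpos by simp
  define nrm where "nrm x = op_norm N (local_matrix p N JN x)" for x
  define ph where "ph x = (\<Sum>i<N. UU p N JN \<beta> x i)" for x
  define E1 where "E1 x = (nrm x ^ 4 < L ^ 4)" for x
  define E2 where "E2 x = ((ph x)\<^sup>2 < A\<^sup>2 * real N)" for x
  define E3 where "E3 x = ((\<Sum>i<N. \<bar>local_field p N JN x i\<bar>) \<ge> d1 * real N)" for x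
  let ?E = "\<lambda>x. ereal (sqrt (real N)) * \<bar>mpl_estimate p N JN x - ereal \<beta>\<bar> \<le> ereal M"
  have good: "?E x" if x: "x \<in> spins N" and e1: "E1 x" and e2: "E2 x" and e3: "E3 x" for x
  proof -
    have L0: "L > 0" using L by simp
    have A0: "A \<ge> 0" using A by simp
    have n0: "nrm x \<ge> 0" unfolding nrm_def by (rule opn_nonneg)
    have nl: "nrm x < L" using power_less_imp_less_base[of "nrm x" 4 L] e1 L0 unfolding E1_def by simp
    have sq: "(A * sqrt (real N))\<^sup>2 = A\<^sup>2 * real N" using Npos by (simp add: power_mult_distrib)
    have "\<bar>ph x\<bar>\<^sup>2 < (A * sqrt (real N))\<^sup>2" unfolding sq power2_abs using e2 unfolding E2_def .
    hence pl: "\<bar>ph x\<bar> < A * sqrt (real N)"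
      by (rule power2_less_imp_less) (use A0 in simp)
    show ?thesis
      by (rule det[OF v p2 bpos N1 x L0 d1 Kd cqd sd Md A0 nl[unfolded nrm_def] pl[unfolded ph_def]
          e3[unfolded E3_def] eps])
  qed
  have U: "gibbs_prob p N JN \<beta> ?E \<ge> 1 - gibbs_prob p N JN \<beta> (\<lambda>x. \<not> E1 x)
     - gibbs_prob p N JN \<beta> (\<lambda>x. \<not> E2 x) - gibbs_prob p N JN \<beta> (\<lambda>x. \<not> E3 x)"
    by (rule union3[OF v p2]) (rule good)
  have P1: "gibbs_prob p N JN \<beta> (\<lambda>x. \<not> E1 x) < \<delta> / 4"
  proof -
    have eq: "(\<lambda>x. \<not> E1 x) = (\<lambda>x. nrm x ^ 4 \<ge> L ^ 4)" unfolding E1_def by (auto simp: not_less)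
    have "gibbs_prob p N JN \<beta> (\<lambda>x. nrm x ^ 4 \<ge> L ^ 4) \<le> gibbs_expect p N JN \<beta> (\<lambda>x. nrm x ^ 4) / L ^ 4"
      by (rule markov[OF v p2]) (use L in \<open>auto simp: nrm_def opn_nonneg\<close>)
    also have "\<dots> \<le> C / L ^ 4" using E4 L unfolding nrm_def by (intro divide_right_mono) auto
    also have "\<dots> \<le> (C + 1) / L"
    proof -
      have "L ^ 1 \<le> L ^ 4" using L by (intro power_increasing) auto
      hence "C / L ^ 4 \<le> C / L" using C0 L by (intro divide_left_mono) auto
      also have "\<dots> \<le> (C + 1) / L" using L by (intro divide_right_mono) auto
      finally show ?thesis .
    qed
    also have "\<dots> < \<delta> / 4" unfolding Ld using C0 \<delta> by (simp add: field_simps)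
    finally show ?thesis unfolding eq .
  qed
  have P2: "gibbs_prob p N JN \<beta> (\<lambda>x. \<not> E2 x) < \<delta> / 4"
  proof -
    have eq: "(\<lambda>x. \<not> E2 x) = (\<lambda>x. (ph x)\<^sup>2 \<ge> A\<^sup>2 * real N)" unfolding E2_def by (auto simp: not_less)
    have ApN: "A\<^sup>2 * real N > 0" using A Npos by simp
    have "gibbs_prob p N JN \<beta> (\<lambda>x. (ph x)\<^sup>2 \<ge> A\<^sup>2 * real N) \<le> gibbs_expect p N JN \<beta> (\<lambda>x. (ph x)\<^sup>2) / (A\<^sup>2 * real N)"
      by (rule markov[OF v p2]) (use ApN in auto)
    also have "gibbs_expect p N JN \<beta> (\<lambda>x. (ph x)\<^sup>2) \<le> real N * V"
    proof -
      have "gibbs_expect p N JN \<beta> (\<lambda>x. (ph x)\<^sup>2) \<le> real N * KK p \<beta> * gibbs_expect p N JN \<beta> (\<lambda>x. 1 + nrm x ^ 4)"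
        unfolding ph_def nrm_def by (rule var_bound[OF v p2 b0])
      also have "gibbs_expect p N JN \<beta> (\<lambda>x. 1 + nrm x ^ 4) = 1 + gibbs_expect p N JN \<beta> (\<lambda>x. nrm x ^ 4)"
        unfolding gexp_add by (simp add: gibbs_expect_def gibbs_sum[OF v p2])
      also have "real N * KK p \<beta> * (1 + gibbs_expect p N JN \<beta> (\<lambda>x. nrm x ^ 4)) \<le> real N * K0 * (1 + C)"
        using E4 K0 Npos unfolding K0d nrm_def by (intro mult_left_mono) auto
      also have "\<dots> \<le> real N * V" unfolding Vd using Npos by simp
      finally show ?thesis .
    qed
    hence "gibbs_expect p N JN \<beta> (\<lambda>x. (ph x)\<^sup>2) / (A\<^sup>2 * real N) \<le> real N * V / (A\<^sup>2 * real N)"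
      using ApN by (intro divide_right_mono) auto
    also have "\<dots> = V / A\<^sup>2" using Npos by simp
    also have "\<dots> \<le> V / A"
    proof -
      have "A \<le> A\<^sup>2" using A by (simp add: power2_eq_square)
      thus ?thesis using V A by (intro divide_left_mono) auto
    qed
    also have "\<dots> < \<delta> / 4" unfolding Ad using V \<delta> by (simp add: field_simps)
    finally show ?thesis unfolding eq .
  qed
  have P3: "gibbs_prob p N JN \<beta> (\<lambda>x. \<not> E3 x) < \<delta> / 4"
  proof -
    have "gibbs_prob p N JN \<beta> (\<lambda>x. \<not> E3 x) \<le> exp (\<beta> * d1 * real N - free_energy p N JN \<beta>)"
      unfolding E3_def by (rule fe_tail[OF v p2 b0])
    also have "\<dots> \<le> exp (- (c0 / 2) * real N)"
    proof -
      have "\<beta> * d1 = c0 / 2" unfolding d1d using bpos by simp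
      hence e: "\<beta> * d1 * real N = c0 / 2 * real N" by simp
      have "free_energy p N JN \<beta> > c0 * real N" using F Npos by (simp add: field_simps)
      hence "\<beta> * d1 * real N - free_energy p N JN \<beta> \<le> - (c0 / 2) * real N" unfolding e by linarith
      thus ?thesis by simp
    qed
    also have "\<dots> < \<delta> / 4" by (rule ex)
    finally show ?thesis .
  qed
  show ?thesis using U P1 P2 P3 \<delta> by linarith
qed

theorem mainTheorem13:
  fixes p :: nat and \<beta> :: real and J :: "nat \<Rightarrow> nat list \<Rightarrow> real"
  assumes "p \<ge> 2" and "\<beta> > 0"
    and "\<And>N. N \<ge> 1 \<Longrightarrow> valid_tensor p N (J N)"
    and "\<exists>C. \<forall>N\<ge>1. gibbs_expect p N (J N) \<beta> (\<lambda>z. (op_norm N (local_matrix p N (J N) z)) ^ 4) \<le> C"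
    and "liminf (\<lambda>N. ereal (free_energy p N (J N) \<beta> / real N)) > 0"
  shows "\<forall>\<delta>>0. \<exists>M>0. \<forall>\<^sub>F N in sequentially.
           gibbs_prob p N (J N) \<beta>
             (\<lambda>x. ereal (sqrt (real N)) * \<bar>mpl_estimate p N (J N) x - ereal \<beta>\<bar> \<le> ereal M)
           > 1 - \<delta>"
proof (intro allI impI)
  fix \<delta> :: real assume \<delta>: "\<delta> > 0"
  note p2 = assms(1) and bpos = assms(2) and vt = assms(3)
  have b0: "\<beta> \<ge> 0" using bpos by simp
  have v1: "valid_tensor p 1 (J 1)" using vt by simp
  obtain C where C: "\<forall>N\<ge>1. gibbs_expect p N (J N) \<beta> (\<lambda>z. (op_norm N (local_matrix p N (J N) z)) ^ 4) \<le> C"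
    using assms(4) by blast
  have C0: "C \<ge> 0"
  proof -
    have "0 \<le> gibbs_expect p 1 (J 1) \<beta> (\<lambda>z. (op_norm 1 (local_matrix p 1 (J 1) z)) ^ 4)"
      unfolding gibbs_expect_def using gibbs_nonneg[OF v1 p2] opn_nonneg
      by (intro sum_nonneg mult_nonneg_nonneg zero_le_power) auto
    thus ?thesis using C by force
  qed
  obtain c0 where c0: "c0 > 0"
    and ev1: "eventually (\<lambda>N. free_energy p N (J N) \<beta> / real N > c0) sequentially"
  proof -
    obtain z where z: "0 < ereal z" "ereal z < liminf (\<lambda>N. ereal (free_energy p N (J N) \<beta> / real N))"
      using ereal_dense2[OF assms(5)] by blast
    have "eventually (\<lambda>N. ereal (free_energy p N (J N) \<beta> / real N) > ereal z) sequentially"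
      by (rule less_LiminfD[OF z(2)])
    hence "eventually (\<lambda>N. free_energy p N (J N) \<beta> / real N > z) sequentially" by simp
    moreover have "z > 0" using z(1) by simp
    ultimately show thesis using that by blast
  qed
  define K0 where "K0 = KK p \<beta>"
  define V where "V = K0 * (1 + C) + 1"
  define L where "L = 1 + 4 * (C + 1) / \<delta>"
  define A where "A = 1 + 4 * V / \<delta>"
  define d1 where "d1 = c0 / (2 * \<beta>)"
  define K where "K = 2 * L\<^sup>2 / d1"
  define cq where "cq = d1\<^sup>2 / 4"
  define s where "s = 1 - tanh (real p * (2 * \<beta>) * K) ^ 2"
  define M where "M = A / (real p * s * cq) + 1"
  have K0: "K0 \<ge> 0" unfolding K0_def KK_def[OF v1 p2 b0] using p2 b0 by simp
  have V: "V \<ge> 1" unfolding V_def using K0 C0 by simp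
  have A: "A \<ge> 1" unfolding A_def using V \<delta> by simp
  have d1: "d1 > 0" unfolding d1_def using c0 bpos by simp
  have cq: "cq > 0" unfolding cq_def using d1 by simp
  have pp: "real p > 0" using p2 by simp
  have s: "s > 0"
  proof -
    have "\<bar>tanh (real p * (2 * \<beta>) * K)\<bar> < 1" using tanh_real_bounds by (simp add: abs_less_iff)
    hence "tanh (real p * (2 * \<beta>) * K) ^ 2 < 1" by (simp add: abs_square_less_1)
    thus ?thesis unfolding s_def by simp
  qed
  have Mpos: "M > 0" unfolding M_def using A pp s cq by (simp add: add_nonneg_pos)
  have ev0: "eventually (\<lambda>N. N \<ge> (1::nat)) sequentially" by (rule eventually_ge_at_top)
  have ev2: "eventually (\<lambda>N. exp (- (c0 / 2) * real N) < \<delta> / 4) sequentially"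
  proof -
    have "((\<lambda>N. exp (- (c0 / 2) * real N)) \<longlongrightarrow> 0) sequentially" using c0 by real_asymp
    thus ?thesis by (rule order_tendstoD(2)) (use \<delta> in simp)
  qed
  have ev3: "eventually (\<lambda>N. M / sqrt (real N) < \<beta>) sequentially"
  proof -
    have "((\<lambda>N. M / sqrt (real N)) \<longlongrightarrow> 0) sequentially" by real_asymp
    thus ?thesis by (rule order_tendstoD(2)) (rule bpos)
  qed
  show "\<exists>M>0. \<forall>\<^sub>F N in sequentially.
           gibbs_prob p N (J N) \<beta>
             (\<lambda>x. ereal (sqrt (real N)) * \<bar>mpl_estimate p N (J N) x - ereal \<beta>\<bar> \<le> ereal M)
           > 1 - \<delta>"
  proof (intro exI conjI)
    show "M > 0" by (rule Mpos)
    show "\<forall>\<^sub>F N in sequentially.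
           gibbs_prob p N (J N) \<beta>
             (\<lambda>x. ereal (sqrt (real N)) * \<bar>mpl_estimate p N (J N) x - ereal \<beta>\<bar> \<le> ereal M)
           > 1 - \<delta>"
      using ev0 ev1 ev2 ev3
    proof eventually_elim
      case (elim N)
      show ?case
        by (rule key_N[OF vt[OF elim(1)] p2 bpos elim(1) \<delta> C0 _ c0 elim(2) elim(3)
              K0_def V_def L_def A_def d1_def K_def cq_def s_def M_def elim(4)])
          (use C elim(1) in blast)
    qed
  qed
qed


end
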